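(* Let $\mathcal{H}$ be a finite-dimensional Hilbert space, $\tau$ a quantum channel on $\mathcal{H}$ (extended linearly to all operators on $\mathcal{H}$), and let $\Theta\neq0$ be an operator on $\mathcal{H}$ with $\tau(\Theta)=\lambda\Theta$ for some $\lambda$ with $|\lambda|=1$. Let $g=\mathrm{Tr}\sqrt{\Theta^{\dagger}\Theta}>0$. Then the density matrices $\rho=\sqrt{\Theta\Theta^{\dagger}}/g$ and $\sigma=\sqrt{\Theta^{\dagger}\Theta}/g$ are fixed points of $\tau$.
   Context: A quantum channel is a linear, completely positive, trace-preserving map on the space of linear operators on $\mathcal{H}$. *)

theory Defs
  imports "Jordan_Normal_Form.Schur_Decomposition"
begin

text \<open>Operators on the finite-dimensional Hilbert space C^n are complex n x n matrices.\<close>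

definition mtrace :: "complex mat \<Rightarrow> complex" where
  "mtrace A = (\<Sum>i<dim_row A. A $$ (i, i))"

definition psd :: "complex mat \<Rightarrow> bool" where
  "psd A \<longleftrightarrow> A \<in> carrier_mat (dim_row A) (dim_row A) \<and>
     (\<forall>v \<in> carrier_vec (dim_row A).
        Im (conjugate v \<bullet> (A *\<^sub>v v)) = 0 \<and> Re (conjugate v \<bullet> (A *\<^sub>v v)) \<ge> 0)"

definition msqrt :: "complex mat \<Rightarrow> complex mat" where
  "msqrt A = (THE B. psd B \<and> B * B = A)"

definition density_matrix :: "nat \<Rightarrow> complex mat \<Rightarrow> bool" where
  "density_matrix n A \<longleftrightarrow> A \<in> carrier_mat n n \<and> psd A \<and> mtrace A = 1"

text \<open>The amplification id_k \<otimes> \<tau> acting on (k*n) x (k*n) matrices, viewed as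
  k x k block matrices with n x n blocks (index p = i*n + a).\<close>
definition ampl :: "nat \<Rightarrow> nat \<Rightarrow> (complex mat \<Rightarrow> complex mat) \<Rightarrow> complex mat \<Rightarrow> complex mat" where
  "ampl k n \<tau> M = mat (k * n) (k * n) (\<lambda>(p, q).
      \<tau> (mat n n (\<lambda>(a, b). M $$ ((p div n) * n + a, (q div n) * n + b))) $$ (p mod n, q mod n))"

definition linear_map_mat :: "nat \<Rightarrow> (complex mat \<Rightarrow> complex mat) \<Rightarrow> bool" where
  "linear_map_mat n \<tau> \<longleftrightarrow>
     (\<forall>A \<in> carrier_mat n n. \<tau> A \<in> carrier_mat n n) \<and>
     (\<forall>A \<in> carrier_mat n n. \<forall>B \<in> carrier_mat n n. \<tau> (A + B) = \<tau> A + \<tau> B) \<and>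
     (\<forall>c. \<forall>A \<in> carrier_mat n n. \<tau> (c \<cdot>\<^sub>m A) = c \<cdot>\<^sub>m \<tau> A)"

definition completely_positive :: "nat \<Rightarrow> (complex mat \<Rightarrow> complex mat) \<Rightarrow> bool" where
  "completely_positive n \<tau> \<longleftrightarrow>
     (\<forall>k. \<forall>M \<in> carrier_mat (k * n) (k * n). psd M \<longrightarrow> psd (ampl k n \<tau> M))"

definition trace_preserving :: "nat \<Rightarrow> (complex mat \<Rightarrow> complex mat) \<Rightarrow> bool" where
  "trace_preserving n \<tau> \<longleftrightarrow> (\<forall>A \<in> carrier_mat n n. mtrace (\<tau> A) = mtrace A)"

definition quantum_channel :: "nat \<Rightarrow> (complex mat \<Rightarrow> complex mat) \<Rightarrow> bool" where
  "quantum_channel n \<tau> \<longleftrightarrow>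
     linear_map_mat n \<tau> \<and> completely_positive n \<tau> \<and> trace_preserving n \<tau>"

end

theory Submission
  imports Defs
begin

definition adj :: "complex mat \<Rightarrow> complex mat" where
  "adj A = mat (dim_col A) (dim_row A) (\<lambda>(i,j). cnj (A $$ (j,i)))"

lemma mat_adjoint_adj: "mat_adjoint A = adj A"
  unfolding mat_adjoint_def adj_def
  by (rule eq_matI, auto simp: mat_of_rows_def)

lemma adj_dims[simp]: "dim_row (adj A) = dim_col A" "dim_col (adj A) = dim_row A"
  by (auto simp: adj_def)

lemma adj_carrier[simp,intro]: "A \<in> carrier_mat n m \<Longrightarrow> adj A \<in> carrier_mat m n"
  by (auto simp: adj_def)

lemma adj_index[simp]: "i < dim_col A \<Longrightarrow> j < dim_row A \<Longrightarrow> adj A $$ (i,j) = cnj (A $$ (j,i))"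
  by (auto simp: adj_def)

lemma adj_adj[simp]: "adj (adj A) = A"
  by (rule eq_matI, auto)

lemma adj_mult: assumes "A \<in> carrier_mat n k" "B \<in> carrier_mat k m"
  shows "adj (A * B) = adj B * adj A"
  using assms
  by (intro eq_matI, auto simp: scalar_prod_def cnj_sum intro!: sum.cong)

lemma adj_add: assumes "A \<in> carrier_mat n m" "B \<in> carrier_mat n m"
  shows "adj (A + B) = adj A + adj B"
  using assms by (intro eq_matI, auto)

lemma adj_minus: assumes "A \<in> carrier_mat n m" "B \<in> carrier_mat n m"
  shows "adj (A - B) = adj A - adj B"
  using assms by (intro eq_matI, auto)

lemma adj_smult: "adj (c \<cdot>\<^sub>m A) = cnj c \<cdot>\<^sub>m adj A"
  by (intro eq_matI, auto)

lemma adj_one[simp]: "adj (1\<^sub>m n) = 1\<^sub>m n"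
  by (intro eq_matI, auto)

lemma adj_zero[simp]: "adj (0\<^sub>m n m) = 0\<^sub>m m n"
  by (intro eq_matI, auto)

lemma adj_four_block: assumes "A \<in> carrier_mat n1 m1" "B \<in> carrier_mat n1 m2"
  "C \<in> carrier_mat n2 m1" "D \<in> carrier_mat n2 m2"
  shows "adj (four_block_mat A B C D) = four_block_mat (adj A) (adj C) (adj B) (adj D)"
  using assms by (intro eq_matI, auto)


lemma adj_move: assumes A: "A \<in> carrier_mat n m" and x: "x \<in> carrier_vec n" and y: "y \<in> carrier_vec m"
  shows "conjugate x \<bullet> (A *\<^sub>v y) = conjugate (adj A *\<^sub>v x) \<bullet> y"
proof -
  have "conjugate x \<bullet> (A *\<^sub>v y) = (\<Sum>k<n. \<Sum>l<m. cnj (x $ k) * A $$ (k,l) * y $ l)"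
    using A x y by (auto simp: scalar_prod_def sum_distrib_left atLeast0LessThan mult.assoc intro!: sum.cong)
  also have "\<dots> = (\<Sum>l<m. \<Sum>k<n. cnj (x $ k) * A $$ (k,l) * y $ l)"
    by (rule sum.swap)
  also have "\<dots> = conjugate (adj A *\<^sub>v x) \<bullet> y"
    using A x y apply (auto simp: scalar_prod_def atLeast0LessThan cnj_sum intro!: sum.cong)
    by (simp add: sum_distrib_left ac_simps)
  finally show ?thesis .
qed

definition bil :: "complex mat \<Rightarrow> complex vec \<Rightarrow> complex vec \<Rightarrow> complex" where
  "bil A x y = conjugate x \<bullet> (A *\<^sub>v y)"

lemma bil_expand: assumes A: "A \<in> carrier_mat n n" and x: "x \<in> carrier_vec n" and y: "y \<in> carrier_vec n"
  shows "bil A (x + c \<cdot>\<^sub>v y) (x + c \<cdot>\<^sub>v y) = bil A x x + c * bil A x y + cnj c * bil A y x + cnj c * c * bil A y y"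
proof -
  have cy: "c \<cdot>\<^sub>v y \<in> carrier_vec n" using y by auto
  have "bil A (x + c \<cdot>\<^sub>v y) (x + c \<cdot>\<^sub>v y) = (conjugate x + cnj c \<cdot>\<^sub>v conjugate y) \<bullet> (A *\<^sub>v x + c \<cdot>\<^sub>v (A *\<^sub>v y))"
    unfolding bil_def
  proof -
    have "conjugate (x + c \<cdot>\<^sub>v y) = conjugate x + cnj c \<cdot>\<^sub>v conjugate y"
      using x y by (intro eq_vecI, auto)
    moreover have "A *\<^sub>v (x + c \<cdot>\<^sub>v y) = A *\<^sub>v x + c \<cdot>\<^sub>v (A *\<^sub>v y)"
      using A x y cy by (simp add: mult_add_distrib_mat_vec[OF A x cy] mult_mat_vec[OF A y])
    ultimately show "conjugate (x + c \<cdot>\<^sub>v y) \<bullet> (A *\<^sub>v (x + c \<cdot>\<^sub>v y)) = (conjugate x + cnj c \<cdot>\<^sub>v conjugate y) \<bullet> (A *\<^sub>v x + c \<cdot>\<^sub>v (A *\<^sub>v y))"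
      by simp
  qed
  also have "\<dots> = bil A x x + c * bil A x y + cnj c * bil A y x + cnj c * c * bil A y y"
    unfolding bil_def 
  proof -
    have c: "conjugate x \<in> carrier_vec n" "cnj c \<cdot>\<^sub>v conjugate y \<in> carrier_vec n" "A *\<^sub>v x \<in> carrier_vec n" "c \<cdot>\<^sub>v (A *\<^sub>v y) \<in> carrier_vec n"
      "conjugate y \<in> carrier_vec n" "A *\<^sub>v y \<in> carrier_vec n"
      using A x y by auto
    show "(conjugate x + cnj c \<cdot>\<^sub>v conjugate y) \<bullet> (A *\<^sub>v x + c \<cdot>\<^sub>v (A *\<^sub>v y)) =
      conjugate x \<bullet> (A *\<^sub>v x) + c * (conjugate x \<bullet> (A *\<^sub>v y)) + cnj c * (conjugate y \<bullet> (A *\<^sub>v x)) + cnj c * c * (conjugate y \<bullet> (A *\<^sub>v y))"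
      unfolding add_scalar_prod_distrib[OF c(1,2) add_carrier_vec[OF c(3,4)]]
        scalar_prod_add_distrib[OF c(1,3,4)] scalar_prod_add_distrib[OF c(2,3,4)]
      using c by (simp add: algebra_simps)
  qed
  finally show ?thesis .
qed

lemma bil_unit: assumes A: "A \<in> carrier_mat n n" and i: "i < n" and j: "j < n"
  shows "bil A (unit_vec n i) (unit_vec n j) = A $$ (i,j)"
proof -
  have "conjugate (unit_vec n i) = (unit_vec n i :: complex vec)"
    by (intro eq_vecI, auto simp: unit_vec_def)
  thus ?thesis unfolding bil_def using A i j by simp
qed

lemma psd_carrier: "psd A \<Longrightarrow> A \<in> carrier_mat (dim_row A) (dim_row A)"
  unfolding psd_def by auto

lemma psdD: "psd A \<Longrightarrow> A \<in> carrier_mat n n \<Longrightarrow> v \<in> carrier_vec n \<Longrightarrow> Im (bil A v v) = 0 \<and> Re (bil A v v) \<ge> 0"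
  unfolding psd_def bil_def by auto

lemma psdI: "A \<in> carrier_mat n n \<Longrightarrow> (\<And>v. v \<in> carrier_vec n \<Longrightarrow> Im (bil A v v) = 0 \<and> Re (bil A v v) \<ge> 0) \<Longrightarrow> psd A"
  unfolding psd_def bil_def by auto

lemma aux1: fixes a b u w :: complex
  shows "Im (a + 1 * u + cnj 1 * w + cnj 1 * 1 * b) = 0 \<Longrightarrow> Im a = 0 \<Longrightarrow> Im b = 0 \<Longrightarrow> Im (u + w) = 0"
  by simp

lemma aux2: fixes a b u w :: complex
  shows "Im (a + \<i> * u + cnj \<i> * w + cnj \<i> * \<i> * b) = 0 \<Longrightarrow> Im a = 0 \<Longrightarrow> Im b = 0 \<Longrightarrow> Re (u - w) = 0"
  by simp

lemma aux3: fixes u w :: complex shows "Im (u + w) = 0 \<Longrightarrow> Re (u - w) = 0 \<Longrightarrow> w = cnj u"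
  by (simp add: complex_eq_iff)

lemma bil_herm_sym: assumes A: "A \<in> carrier_mat n n" and real: "\<And>v. v \<in> carrier_vec n \<Longrightarrow> Im (bil A v v) = 0"
  and x: "x \<in> carrier_vec n" and y: "y \<in> carrier_vec n"
  shows "bil A y x = cnj (bil A x y)"
proof -
  have c1: "x + 1 \<cdot>\<^sub>v y \<in> carrier_vec n" using x y by simp
  have c2: "x + \<i> \<cdot>\<^sub>v y \<in> carrier_vec n" using x y by simp
  have "Im (bil A x x + 1 * bil A x y + cnj 1 * bil A y x + cnj 1 * 1 * bil A y y) = 0"
    using real[OF c1] unfolding bil_expand[OF A x y] .
  note 1 = aux1[OF this real[OF x] real[OF y]]
  have "Im (bil A x x + \<i> * bil A x y + cnj \<i> * bil A y x + cnj \<i> * \<i> * bil A y y) = 0"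
    using real[OF c2] unfolding bil_expand[OF A x y] .
  note 2 = aux2[OF this real[OF x] real[OF y]]
  show ?thesis using aux3[OF 1 2] .
qed

lemma psd_herm: assumes p: "psd A" shows "adj A = A"
proof -
  obtain n where A: "A \<in> carrier_mat n n" using psd_carrier[OF p] by blast
  have real: "Im (bil A v v) = 0" if "v \<in> carrier_vec n" for v using psdD[OF p A that] by blast
  show ?thesis
  proof (rule eq_matI)
    fix i j assume i: "i < dim_row A" and j: "j < dim_col A"
    hence i': "i < n" and j': "j < n" using A by auto
    have ui: "unit_vec n i \<in> carrier_vec n" and uj: "unit_vec n j \<in> carrier_vec n" by auto
    have "bil A (unit_vec n j) (unit_vec n i) = cnj (bil A (unit_vec n i) (unit_vec n j))"
      by (rule bil_herm_sym[OF A real ui uj])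
    hence "A $$ (j, i) = cnj (A $$ (i,j))"
      unfolding bil_unit[OF A i' j'] bil_unit[OF A j' i'] .
    thus "adj A $$ (i, j) = A $$ (i, j)" using i' j' A by simp
  qed (use A in auto)
qed

lemma herm_bil: assumes A: "A \<in> carrier_mat n n" and h: "adj A = A" and x: "x \<in> carrier_vec n" and y: "y \<in> carrier_vec n"
  shows "bil A x y = cnj (bil A y x)"
proof -
  have "bil A x y = conjugate (A *\<^sub>v x) \<bullet> y" unfolding bil_def adj_move[OF A x y] h ..
  also have "\<dots> = y \<bullet>c (A *\<^sub>v x)" using A x y by (subst conjugate_vec_sprod_comm[of _ n], auto)
  also have "\<dots> = cnj (bil A y x)" unfolding bil_def 
    using conjugate_conjugate_sprod[of y n "A *\<^sub>v x"] A y x by simp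
  finally show ?thesis .
qed

lemma cscalar_self: fixes w :: "complex vec" assumes w: "w \<in> carrier_vec n"
  shows "Im (conjugate w \<bullet> w) = 0" "Re (conjugate w \<bullet> w) \<ge> 0" "Re (conjugate w \<bullet> w) = 0 \<Longrightarrow> w = 0\<^sub>v n"
proof -
  have e: "conjugate w \<bullet> w = w \<bullet>c w" using conjugate_vec_sprod_comm[OF w w] by simp
  have "w \<bullet>c w \<ge> 0" by (rule conjugate_square_ge_0_vec)
  thus "Im (conjugate w \<bullet> w) = 0" "Re (conjugate w \<bullet> w) \<ge> 0" unfolding e by (auto simp: less_eq_complex_def)
  assume "Re (conjugate w \<bullet> w) = 0"
  with \<open>w \<bullet>c w \<ge> 0\<close> have "w \<bullet>c w = 0" unfolding e by (auto simp: less_eq_complex_def complex_eq_iff)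
  thus "w = 0\<^sub>v n" using conjugate_square_eq_0_vec[OF w] by simp
qed

lemma psd_qf_zero: assumes p: "psd A" and A: "A \<in> carrier_mat n n" and v: "v \<in> carrier_vec n"
  and z: "bil A v v = 0"
  shows "A *\<^sub>v v = 0\<^sub>v n"
proof -
  define w where "w = A *\<^sub>v v"
  have w: "w \<in> carrier_vec n" using A v w_def by auto
  define s where "s = conjugate w \<bullet> w"
  have h: "adj A = A" by (rule psd_herm[OF p])
  have wv: "bil A w v = s" unfolding bil_def s_def w_def ..
  have vw: "bil A v w = s" using herm_bil[OF A h v w] wv cscalar_self(1)[OF w] unfolding s_def
    by (simp add: complex_eq_iff)
  define c where "c = bil A w w"
  have C: "Re c \<ge> 0" using psdD[OF p A w] c_def by auto
  have S: "Re s \<ge> 0" "Im s = 0" using cscalar_self[OF w] s_def by auto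
  have ineq: "0 \<le> - 2 * t * Re s + t * t * Re c" if t: "t > 0" for t :: real
  proof -
    have c1: "v + complex_of_real (-t) \<cdot>\<^sub>v w \<in> carrier_vec n" using v w by simp
    have "Re (bil A (v + complex_of_real (-t) \<cdot>\<^sub>v w) (v + complex_of_real (-t) \<cdot>\<^sub>v w)) \<ge> 0"
      using psdD[OF p A c1] by blast
    also have "bil A (v + complex_of_real (-t) \<cdot>\<^sub>v w) (v + complex_of_real (-t) \<cdot>\<^sub>v w)
      = complex_of_real (-t) * s + complex_of_real (-t) * s + complex_of_real (t * t) * c"
      unfolding bil_expand[OF A v w] z vw wv c_def by simp
    finally show ?thesis using S by (simp add: algebra_simps)
  qed
  have "Re s \<le> 0"
  proof (rule ccontr)
    assume "\<not> Re s \<le> 0"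
    hence sp: "Re s > 0" by simp
    define t where "t = Re s / (Re c + 1)"
    have tp: "t > 0" using sp C t_def by simp
    have "0 \<le> t * (t * Re c - 2 * Re s)" using ineq[OF tp] by (simp add: algebra_simps)
    hence "t * Re c \<ge> 2 * Re s" using tp by (simp add: zero_le_mult_iff)
    moreover have "t * Re c < Re s" unfolding t_def using sp C 
      by (simp add: field_simps)
    ultimately show False using sp by simp
  qed
  hence "Re s = 0" using S by simp
  thus ?thesis using cscalar_self(3)[OF w] s_def w_def by simp
qed

lemma adj_mult_vec_carrier[simp]: "X \<in> carrier_mat m n \<Longrightarrow> v \<in> carrier_vec m \<Longrightarrow> adj X *\<^sub>v v \<in> carrier_vec n"
  by (rule mult_mat_vec_carrier[OF adj_carrier])

lemma bil_mult_adj: assumes X: "X \<in> carrier_mat m n" and B: "B \<in> carrier_mat n n" and v: "v \<in> carrier_vec m"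
  shows "bil (X * B * adj X) v v = bil B (adj X *\<^sub>v v) (adj X *\<^sub>v v)"
proof -
  have XB: "X * B \<in> carrier_mat m n" using X B by simp
  have "(X * B * adj X) *\<^sub>v v = (X * B) *\<^sub>v (adj X *\<^sub>v v)" 
    using assoc_mult_mat_vec[OF XB adj_carrier[OF X] v] .
  also have "\<dots> = X *\<^sub>v (B *\<^sub>v (adj X *\<^sub>v v))" 
    using assoc_mult_mat_vec[OF X B, of "adj X *\<^sub>v v"] mult_mat_vec_carrier[OF adj_carrier[OF X] v] by simp
  finally have "(X * B * adj X) *\<^sub>v v = X *\<^sub>v (B *\<^sub>v (adj X *\<^sub>v v))" .
  thus ?thesis unfolding bil_def using adj_move[OF X v, of "B *\<^sub>v (adj X *\<^sub>v v)"] X B v by simp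
qed

lemma psd_congr: assumes p: "psd B" and X: "X \<in> carrier_mat m n" and B: "B \<in> carrier_mat n n"
  shows "psd (X * B * adj X)"
proof (rule psdI[of _ m])
  show "X * B * adj X \<in> carrier_mat m m" using mult_carrier_mat[OF mult_carrier_mat[OF X B] adj_carrier[OF X]] .
  fix v :: "complex vec" assume v: "v \<in> carrier_vec m"
  show "Im (bil (X * B * adj X) v v) = 0 \<and> Re (bil (X * B * adj X) v v) \<ge> 0"
    unfolding bil_mult_adj[OF X B v] by (rule psdD[OF p B], use X v in auto)
qed

lemma psd_smult: assumes p: "psd A" and c: "Im c = 0" "Re c \<ge> 0"
  shows "psd (c \<cdot>\<^sub>m A)"
proof -
  obtain n where A: "A \<in> carrier_mat n n" using psd_carrier[OF p] by blast
  show ?thesis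
  proof (rule psdI[of _ n])
    fix v :: "complex vec" assume v: "v \<in> carrier_vec n"
    have "(c \<cdot>\<^sub>m A) *\<^sub>v v = c \<cdot>\<^sub>v (A *\<^sub>v v)"
      using A v by (intro eq_vecI, auto simp: scalar_prod_def sum_distrib_left ac_simps)
    hence "bil (c \<cdot>\<^sub>m A) v v = c * bil A v v" unfolding bil_def 
      using A v by simp
    thus "Im (bil (c \<cdot>\<^sub>m A) v v) = 0 \<and> Re (bil (c \<cdot>\<^sub>m A) v v) \<ge> 0" using psdD[OF p A v] c by simp
  qed (use A in simp)
qed

lemma mtrace_sum: "A \<in> carrier_mat n n \<Longrightarrow> mtrace A = (\<Sum>i<n. A $$ (i,i))"
  unfolding mtrace_def by auto

lemma mtrace_comm: assumes A: "A \<in> carrier_mat n m" and B: "B \<in> carrier_mat m n"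
  shows "mtrace (A * B) = mtrace (B * A)"
proof -
  have "mtrace (A * B) = (\<Sum>i<n. \<Sum>k<m. A $$ (i,k) * B $$ (k,i))"
    unfolding mtrace_def using A B by (auto simp: scalar_prod_def atLeast0LessThan intro!: sum.cong)
  also have "\<dots> = (\<Sum>k<m. \<Sum>i<n. B $$ (k,i) * A $$ (i,k))"
    by (subst sum.swap, simp add: mult.commute)
  also have "\<dots> = mtrace (B * A)"
    unfolding mtrace_def using A B by (auto simp: scalar_prod_def atLeast0LessThan intro!: sum.cong)
  finally show ?thesis .
qed

lemma mtrace_add: "A \<in> carrier_mat n n \<Longrightarrow> B \<in> carrier_mat n n \<Longrightarrow> mtrace (A + B) = mtrace A + mtrace B"
  unfolding mtrace_def by (auto simp: sum.distrib)

lemma mtrace_minus: "A \<in> carrier_mat n n \<Longrightarrow> B \<in> carrier_mat n n \<Longrightarrow> mtrace (A - B) = mtrace A - mtrace B"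
  unfolding mtrace_def by (auto simp: sum_subtractf)

lemma mtrace_smult: "A \<in> carrier_mat n n \<Longrightarrow> mtrace (c \<cdot>\<^sub>m A) = c * mtrace A"
  unfolding mtrace_def by (auto simp: sum_distrib_left)

lemma mtrace_bil: assumes A: "A \<in> carrier_mat n n"
  shows "mtrace A = (\<Sum>i<n. bil A (unit_vec n i) (unit_vec n i))"
  unfolding mtrace_sum[OF A] using bil_unit[OF A] by simp

lemma psd_mtrace: assumes p: "psd A" and A: "A \<in> carrier_mat n n"
  shows "Im (mtrace A) = 0" "Re (mtrace A) \<ge> 0"
proof -
  have "Im (bil A (unit_vec n i) (unit_vec n i)) = 0 \<and> Re (bil A (unit_vec n i) (unit_vec n i)) \<ge> 0" for i
    by (rule psdD[OF p A], simp)
  thus "Im (mtrace A) = 0" "Re (mtrace A) \<ge> 0" unfolding mtrace_bil[OF A] Im_sum Re_sum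
    by (auto intro: sum_nonneg)
qed

lemma adj_A_entry: assumes A: "A \<in> carrier_mat n n" and T: "T \<in> carrier_mat n k" and j: "j < k"
  shows "(adj T * A * T) $$ (j,j) = bil A (col T j) (col T j)"
proof -
  have "adj T * A * T = adj T * (A * T)" using A T by (intro assoc_mult_mat, auto)
  hence "(adj T * A * T) $$ (j,j) = row (adj T) j \<bullet> col (A * T) j" using A T j by simp
  also have "row (adj T) j = conjugate (col T j)" using T j by (intro eq_vecI, auto)
  also have "col (A * T) j = A *\<^sub>v col T j" using A T j by (intro eq_vecI, auto)
  finally show ?thesis unfolding bil_def .
qed

lemma trace_zero_mult: assumes p: "psd A" and A: "A \<in> carrier_mat n n" and T: "T \<in> carrier_mat n k"
  and tr: "Re (mtrace (adj T * A * T)) \<le> 0"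
  shows "A * T = 0\<^sub>m n k"
proof -
  have ATA: "adj T * A * T \<in> carrier_mat k k" using A T by auto
  have nn: "Im (bil A (col T j) (col T j)) = 0 \<and> Re (bil A (col T j) (col T j)) \<ge> 0" for j
    by (rule psdD[OF p A], use T in auto)
  have "mtrace (adj T * A * T) = (\<Sum>j<k. bil A (col T j) (col T j))"
    unfolding mtrace_sum[OF ATA] using adj_A_entry[OF A T] by simp
  hence "(\<Sum>j<k. Re (bil A (col T j) (col T j))) \<le> 0" using tr by (simp add: Re_sum)
  hence "\<forall>j\<in>{..<k}. Re (bil A (col T j) (col T j)) = 0"
    using sum_nonneg_eq_0_iff[of "{..<k}" "\<lambda>j. Re (bil A (col T j) (col T j))"] nn
    by (simp add: order_antisym sum_nonneg)
  hence z: "bil A (col T j) (col T j) = 0" if "j < k" for j using nn that by (simp add: complex_eq_iff)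
  show ?thesis
  proof (rule eq_matI)
    fix i j assume i: "i < dim_row (0\<^sub>m n k)" and j: "j < dim_col (0\<^sub>m n k)"
    have "A *\<^sub>v col T j = 0\<^sub>v n" by (rule psd_qf_zero[OF p A _ z], use T j in auto)
    hence "(A *\<^sub>v col T j) $ i = 0" using i by simp
    thus "(A * T) $$ (i, j) = 0\<^sub>m n k $$ (i, j)" using i j A T by simp
  qed (use A T in auto)
qed

lemma complex_eigen_exists: assumes A: "(A :: complex mat) \<in> carrier_mat n n" and n: "n > 0"
  shows "\<exists>mu v. v \<in> carrier_vec n \<and> v \<noteq> 0\<^sub>v n \<and> A *\<^sub>v v = mu \<cdot>\<^sub>v v"
proof -
  have "degree (char_poly A) = n" using degree_monic_char_poly[OF A] by auto
  hence "degree (char_poly A) \<noteq> 0" using n by simp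
  hence "\<not> constant (poly (char_poly A))" by (simp add: constant_degree)
  then obtain mu where "poly (char_poly A) mu = 0" using fundamental_theorem_of_algebra by blast
  hence "eigenvalue A mu" using eigenvalue_root_char_poly[OF A] by simp
  then obtain v where "eigenvector A v mu" unfolding eigenvalue_def by blast
  thus ?thesis unfolding eigenvector_def using A by auto
qed

definition nrm :: "complex vec \<Rightarrow> complex vec" where
  "nrm w = complex_of_real (1 / sqrt (Re (conjugate w \<bullet> w))) \<cdot>\<^sub>v w"

lemma nrm: assumes w: "w \<in> carrier_vec n" and w0: "w \<noteq> 0\<^sub>v n"
  shows "nrm w \<in> carrier_vec n" "conjugate (nrm w) \<bullet> nrm w = 1"
proof -
  show "nrm w \<in> carrier_vec n" using w unfolding nrm_def by simp
  define s where "s = conjugate w \<bullet> w"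
  have s: "Im s = 0" "Re s > 0" using cscalar_self[OF w] w0 unfolding s_def
    by (auto simp: order_le_less)
  have e: "1 / sqrt (Re s) * (1 / sqrt (Re s)) = 1 / Re s" using s
    using real_sqrt_mult_self[of "Re s"] by simp
  have "conjugate (nrm w) \<bullet> nrm w = complex_of_real (1 / sqrt (Re s)) * complex_of_real (1 / sqrt (Re s)) * s"
    unfolding nrm_def s_def using w by (simp add: conjugate_smult_vec)
  also have "\<dots> = complex_of_real (1 / sqrt (Re s) * (1 / sqrt (Re s))) * s" by (simp only: of_real_mult)
  also have "\<dots> = complex_of_real (1 / Re s) * s" by (simp only: e)
  also have "\<dots> = 1" using s by (simp add: complex_eq_iff)
  finally show "conjugate (nrm w) \<bullet> nrm w = 1" .
qed

lemma nrm_id: assumes "conjugate w \<bullet> w = 1" shows "nrm w = w"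
  unfolding nrm_def assms by simp

definition unitary :: "complex mat \<Rightarrow> nat \<Rightarrow> bool" where
  "unitary W n \<longleftrightarrow> W \<in> carrier_mat n n \<and> adj W * W = 1\<^sub>m n \<and> W * adj W = 1\<^sub>m n"

lemma unitaryI: assumes W: "W \<in> carrier_mat n n" and e: "adj W * W = 1\<^sub>m n" shows "unitary W n"
  unfolding unitary_def using W e mat_mult_left_right_inverse[OF adj_carrier[OF W] W e] by auto

lemma unitary_first_col: assumes u: "u \<in> carrier_vec n" and u1: "conjugate u \<bullet> u = 1" and n: "n > 0"
  shows "\<exists>H. unitary H n \<and> col H 0 = u"
proof -
  interpret cof_vec_space n "TYPE(complex)" .
  have u0: "u \<noteq> 0\<^sub>v n" using u1 u by auto
  define b where "b = basis_completion u"
  define ws where "ws = gram_schmidt n b"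
  from basis_completion[OF u u0, folded b_def]
  have dist_b: "distinct b" and indep: "\<not> lin_dep (set b)" and b: "set b \<subseteq> carrier_vec n" 
    and hdb: "hd b = u" and len_b: "length b = n"
    by auto
  from hdb len_b n obtain vs where bv: "b = u # vs" by (cases b, auto)
  from gram_schmidt_result[OF b dist_b indep refl, folded ws_def]
  have ws: "set ws \<subseteq> carrier_vec n" "corthogonal ws" "length ws = n" 
    by (auto simp: len_b)
  from gram_schmidt_hd[OF u, of vs, folded bv] have hdws: "hd ws = u" unfolding ws_def .
  define ws' where "ws' = map nrm ws"
  have wsi: "ws ! i \<in> carrier_vec n" if "i < n" for i using ws that by auto
  have wsi0: "ws ! i \<noteq> 0\<^sub>v n" if "i < n" for i
  proof
    assume "ws ! i = 0\<^sub>v n"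
    hence "ws ! i \<bullet>c ws ! i = 0" by simp
    thus False using corthogonalD[OF ws(2), of i i] that ws by simp
  qed
  define H where "H = mat_of_cols n ws'"
  have H: "H \<in> carrier_mat n n" unfolding H_def ws'_def using ws mat_of_cols_carrier(1)[of n "map nrm ws"] by simp
  have colH: "col H i = nrm (ws ! i)" if "i < n" for i
    unfolding H_def ws'_def using that ws nrm(1)[OF wsi[OF that] wsi0[OF that]] by simp
  have "adj H * H = 1\<^sub>m n"
  proof (rule eq_matI)
    fix i j assume i: "i < dim_row (1\<^sub>m n)" and j: "j < dim_col (1\<^sub>m n)"
    hence i: "i < n" and j: "j < n" by auto
    have ri: "row (adj H) i = conjugate (col H i)" using H i by (intro eq_vecI, auto)
    have "(adj H * H) $$ (i,j) = conjugate (nrm (ws ! i)) \<bullet> nrm (ws ! j)"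
      using i j H ri colH by simp
    also have "\<dots> = (if i = j then 1 else 0)"
    proof (cases "i = j")
      case True thus ?thesis using nrm(2)[OF wsi[OF i] wsi0[OF i]] by simp
    next
      case False
      have "ws ! j \<bullet>c ws ! i = 0" using corthogonalD[OF ws(2), of j i] False i j ws by auto
      hence "conjugate (ws ! i) \<bullet> ws ! j = 0" 
        using conjugate_vec_sprod_comm[OF wsi[OF j] wsi[OF i]] by simp
      thus ?thesis using False wsi[OF i] wsi[OF j] unfolding nrm_def 
        by (simp add: conjugate_smult_vec)
    qed
    finally show "(adj H * H) $$ (i,j) = 1\<^sub>m n $$ (i,j)" using i j by simp
  qed (use H in auto)
  hence "unitary H n" by (rule unitaryI[OF H])
  moreover have "col H 0 = u" using colH[OF n] hdws ws n nrm_id[OF u1] by (cases ws, auto)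
  ultimately show ?thesis by blast
qed

definition dmat :: "nat \<Rightarrow> (nat \<Rightarrow> complex) \<Rightarrow> complex mat" where
  "dmat n f = mat n n (\<lambda>(i,j). if i = j then f i else 0)"

lemma dmat_carrier[simp]: "dmat n f \<in> carrier_mat n n" unfolding dmat_def by simp

lemma dmat_index[simp]: "i < n \<Longrightarrow> j < n \<Longrightarrow> dmat n f $$ (i,j) = (if i = j then f i else 0)"
  unfolding dmat_def by simp

lemma dmat_dims[simp]: "dim_row (dmat n f) = n" "dim_col (dmat n f) = n"
  unfolding dmat_def by auto

lemma dmat_mult: "dmat n f * dmat n g = dmat n (\<lambda>i. f i * g i)"
proof (rule eq_matI)
  fix i j assume i: "i < dim_row (dmat n (\<lambda>i. f i * g i))" and j: "j < dim_col (dmat n (\<lambda>i. f i * g i))"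
  hence i: "i < n" and j: "j < n" by auto
  have "(dmat n f * dmat n g) $$ (i,j) = (\<Sum>k\<in>{0..<n}. (if i = k then f i else 0) * (if k = j then g k else 0))"
    using i j by (simp add: scalar_prod_def)
  also have "\<dots> = (\<Sum>k\<in>{0..<n}. if k = i then (if i = j then f i * g i else 0) else 0)"
    by (rule sum.cong, auto)
  also have "\<dots> = (if i = j then f i * g i else 0)" using i by simp
  finally show "(dmat n f * dmat n g) $$ (i,j) = dmat n (\<lambda>i. f i * g i) $$ (i,j)" using i j by simp
qed auto

lemma adj_dmat: "adj (dmat n f) = dmat n (\<lambda>i. cnj (f i))"
  by (rule eq_matI, auto)

lemma bd_mult: assumes "A1 \<in> carrier_mat n1 n1" "A2 \<in> carrier_mat n1 n1" "D1 \<in> carrier_mat n2 n2" "D2 \<in> carrier_mat n2 n2"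
  shows "four_block_mat A1 (0\<^sub>m n1 n2) (0\<^sub>m n2 n1) D1 * four_block_mat A2 (0\<^sub>m n1 n2) (0\<^sub>m n2 n1) D2
    = four_block_mat (A1 * A2) (0\<^sub>m n1 n2) (0\<^sub>m n2 n1) (D1 * D2)"
  by (subst mult_four_block_mat[of _ n1 n1 _ n2 _ n2], insert assms, auto)

lemma bd_adj: assumes "A \<in> carrier_mat n1 n1" "D \<in> carrier_mat n2 n2"
  shows "adj (four_block_mat A (0\<^sub>m n1 n2) (0\<^sub>m n2 n1) D) = four_block_mat (adj A) (0\<^sub>m n1 n2) (0\<^sub>m n2 n1) (adj D)"
  by (subst adj_four_block[of _ n1 n1 _ n2 _ n2], insert assms, auto)

lemma sq_mult[simp]: "A \<in> carrier_mat n n \<Longrightarrow> B \<in> carrier_mat n n \<Longrightarrow> A * B \<in> carrier_mat n n"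
  by auto
lemma sq_adj[simp]: "A \<in> carrier_mat n n \<Longrightarrow> adj A \<in> carrier_mat n n"
  by auto
lemma sq_assoc: "A \<in> carrier_mat n n \<Longrightarrow> B \<in> carrier_mat n n \<Longrightarrow> C \<in> carrier_mat n n \<Longrightarrow> A * B * C = A * (B * C)"
  by (rule assoc_mult_mat[of _ n n _ n _ n])

lemma adj_mult_sq: "A \<in> carrier_mat n n \<Longrightarrow> B \<in> carrier_mat n n \<Longrightarrow> adj (A * B) = adj B * adj A"
  by (rule adj_mult)

lemma unitary_mult: assumes "unitary U n" "unitary V n" shows "unitary (U * V) n"
proof -
  have U: "U \<in> carrier_mat n n" and V: "V \<in> carrier_mat n n" and u: "adj U * U = 1\<^sub>m n"
    and v: "adj V * V = 1\<^sub>m n" using assms unfolding unitary_def by auto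
  have "adj (U * V) * (U * V) = adj V * (adj U * U) * V"
    using U V by (simp add: adj_mult[OF U V] sq_assoc[of _ n])
  also have "\<dots> = 1\<^sub>m n" using u v U V by simp
  finally show ?thesis using U V by (intro unitaryI, auto)
qed

lemma unitary_carrier: "unitary W n \<Longrightarrow> W \<in> carrier_mat n n" unfolding unitary_def by auto
lemma unitary_left: "unitary W n \<Longrightarrow> adj W * W = 1\<^sub>m n" unfolding unitary_def by auto
lemma unitary_right: "unitary W n \<Longrightarrow> W * adj W = 1\<^sub>m n" unfolding unitary_def by auto

theorem spectral: 
  assumes "A \<in> carrier_mat n n" "adj A = A"
  shows "\<exists>W d. unitary W n \<and> A = W * dmat n (\<lambda>i. complex_of_real (d i)) * adj W"
  using assms
proof (induction n arbitrary: A)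
  case 0
  show ?case
    by (rule exI[of _ "1\<^sub>m 0"], rule exI[of _ "\<lambda>_. 0"], insert 0, auto simp: unitary_def)
next
  case (Suc m)
  let ?n = "Suc m"
  have A: "A \<in> carrier_mat ?n ?n" and h: "adj A = A" using Suc by auto
  obtain mu v where v: "v \<in> carrier_vec ?n" "v \<noteq> 0\<^sub>v ?n" and Av: "A *\<^sub>v v = mu \<cdot>\<^sub>v v"
    using complex_eigen_exists[OF A] by auto
  define u where "u = nrm v"
  have u: "u \<in> carrier_vec ?n" "conjugate u \<bullet> u = 1" using nrm[OF v] u_def by auto
  have Au: "A *\<^sub>v u = mu \<cdot>\<^sub>v u" unfolding u_def nrm_def
    using mult_mat_vec[OF A v(1)] Av v by (auto simp: smult_smult_assoc mult.commute)
  obtain H where H: "unitary H ?n" and colH: "col H 0 = u" using unitary_first_col[OF u] by auto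
  have Hc: "H \<in> carrier_mat ?n ?n" using unitary_carrier[OF H] .
  define A' where "A' = adj H * A * H"
  have A'c: "A' \<in> carrier_mat ?n ?n" unfolding A'_def using A Hc by simp
  have A'h: "adj A' = A'" unfolding A'_def
    using A Hc h by (simp add: adj_mult_sq[of _ ?n] sq_assoc[of _ ?n])
  have col0: "A' $$ (i,0) = (if i = 0 then mu else 0)" if i: "i < ?n" for i
  proof -
    have "A' = adj H * (A * H)" unfolding A'_def using A Hc by (simp add: sq_assoc[of _ ?n])
    hence "A' $$ (i,0) = row (adj H) i \<bullet> col (A * H) 0" using i A Hc by simp
    also have "col (A * H) 0 = mu \<cdot>\<^sub>v col H 0"
      using A Hc colH Au by (subst col_mult2[of _ ?n ?n], auto)
    also have "row (adj H) i \<bullet> (mu \<cdot>\<^sub>v col H 0) = mu * (row (adj H) i \<bullet> col H 0)"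
      using Hc i by (simp add: scalar_prod_smult_distrib[of _ ?n])
    also have "row (adj H) i \<bullet> col H 0 = (adj H * H) $$ (i,0)" using i Hc by simp
    also have "\<dots> = (if i = 0 then 1 else 0)" unfolding unitary_left[OF H] using i by simp
    finally show ?thesis by simp
  qed
  have row0: "A' $$ (0,j) = (if j = 0 then cnj mu else 0)" if j: "j < ?n" for j
  proof -
    have "A' $$ (0,j) = adj A' $$ (0,j)" unfolding A'h ..
    also have "\<dots> = cnj (A' $$ (j,0))" using A'c j by simp
    finally show ?thesis using col0[OF j] by simp
  qed
  have mu_real: "cnj mu = mu" using row0[of 0] col0[of 0] by simp
  define A3 where "A3 = mat m m (\<lambda>(i,j). A' $$ (Suc i, Suc j))"
  have A3c: "A3 \<in> carrier_mat m m" unfolding A3_def by simp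
  have A3h: "adj A3 = A3"
  proof (rule eq_matI)
    fix i j assume "i < dim_row A3" "j < dim_col A3"
    hence i: "i < m" and j: "j < m" unfolding A3_def by auto
    have "adj A3 $$ (i,j) = cnj (A' $$ (Suc j, Suc i))" using i j unfolding A3_def by simp
    also have "\<dots> = adj A' $$ (Suc i, Suc j)" using i j A'c by simp
    also have "\<dots> = A3 $$ (i,j)" unfolding A'h A3_def using i j by simp
    finally show "adj A3 $$ (i,j) = A3 $$ (i,j)" .
  qed (auto simp: A3_def)
  obtain W3 d3 where W3: "unitary W3 m" and A3eq: "A3 = W3 * dmat m (\<lambda>i. complex_of_real (d3 i)) * adj W3"
    using Suc.IH[OF A3c A3h] by blast
  have W3c: "W3 \<in> carrier_mat m m" using unitary_carrier[OF W3] .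
  define M1 where "M1 = mat 1 1 (\<lambda>_. mu)"
  have M1c: "M1 \<in> carrier_mat 1 1" unfolding M1_def by simp
  define W2 where "W2 = four_block_mat (1\<^sub>m 1) (0\<^sub>m 1 m) (0\<^sub>m m 1) W3"
  have W2c: "W2 \<in> carrier_mat ?n ?n" unfolding W2_def using four_block_carrier_mat[OF one_carrier_mat[of 1] W3c, of "0\<^sub>m 1 m" "0\<^sub>m m 1"] by simp
  have W2u: "unitary W2 ?n"
  proof (rule unitaryI[OF W2c])
    have "adj W2 * W2 = four_block_mat (1\<^sub>m 1) (0\<^sub>m 1 m) (0\<^sub>m m 1) (adj W3 * W3)"
      unfolding W2_def bd_adj[OF one_carrier_mat W3c] 
      by (subst bd_mult[of _ 1 _ _ m], insert W3c, auto)
    also have "\<dots> = 1\<^sub>m ?n" unfolding unitary_left[OF W3] by simp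
    finally show "adj W2 * W2 = 1\<^sub>m ?n" .
  qed
  define d where "d = (\<lambda>i. if i = 0 then Re mu else d3 (i - 1))"
  have mu_eq: "complex_of_real (Re mu) = mu" using mu_real by (simp add: complex_eq_iff)
  have Dblock: "dmat ?n (\<lambda>i. complex_of_real (d i)) = four_block_mat M1 (0\<^sub>m 1 m) (0\<^sub>m m 1) (dmat m (\<lambda>i. complex_of_real (d3 i)))"
    by (rule eq_matI, auto simp: d_def M1_def mu_eq)
  have A'block: "A' = four_block_mat M1 (0\<^sub>m 1 m) (0\<^sub>m m 1) A3"
  proof (rule eq_matI)
    fix i j assume "i < dim_row (four_block_mat M1 (0\<^sub>m 1 m) (0\<^sub>m m 1) A3)" "j < dim_col (four_block_mat M1 (0\<^sub>m 1 m) (0\<^sub>m m 1) A3)"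
    hence i: "i < ?n" and j: "j < ?n" using M1c A3c by auto
    show "A' $$ (i,j) = four_block_mat M1 (0\<^sub>m 1 m) (0\<^sub>m m 1) A3 $$ (i,j)"
    proof (cases "i = 0")
      case True thus ?thesis using row0[OF j] j M1c A3c mu_real by (auto simp: M1_def)
    next
      case False
      then obtain i' where i': "i = Suc i'" by (cases i, auto)
      show ?thesis
      proof (cases "j = 0")
        case True thus ?thesis using col0[OF i] i M1c A3c False by (auto simp: M1_def)
      next
        case False
        then obtain j' where j': "j = Suc j'" by (cases j, auto)
        show ?thesis using i j M1c A3c unfolding i' j' by (auto simp: A3_def)
      qed
    qed
  qed (use A'c M1c A3c in auto)
  have A'eq: "A' = W2 * dmat ?n (\<lambda>i. complex_of_real (d i)) * adj W2"
  proof -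
    have "W2 * dmat ?n (\<lambda>i. complex_of_real (d i)) * adj W2 = 
      four_block_mat (1\<^sub>m 1 * M1 * adj (1\<^sub>m 1)) (0\<^sub>m 1 m) (0\<^sub>m m 1) (W3 * dmat m (\<lambda>i. complex_of_real (d3 i)) * adj W3)"
      unfolding W2_def Dblock bd_adj[OF one_carrier_mat W3c] bd_mult[OF one_carrier_mat M1c W3c dmat_carrier]
      by (rule bd_mult, use M1c W3c in auto)
    also have "\<dots> = A'" unfolding A'block A3eq using M1c by simp
    finally show ?thesis by simp
  qed
  define W where "W = H * W2"
  have Wu: "unitary W ?n" unfolding W_def by (rule unitary_mult[OF H W2u])
  have "A = H * A' * adj H"
  proof -
    have "H * A' * adj H = (H * adj H) * A * (H * adj H)" unfolding A'_def
      using A Hc by (simp add: sq_assoc[of _ ?n])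
    thus ?thesis unfolding unitary_right[OF H] using A by simp
  qed
  also have "\<dots> = W * dmat ?n (\<lambda>i. complex_of_real (d i)) * adj W"
    unfolding A'eq W_def using Hc W2c by (simp add: adj_mult_sq[of _ ?n] sq_assoc[of _ ?n])
  finally show ?case using Wu by blast
qed

lemma psd_dmat: assumes f: "\<And>i. i < n \<Longrightarrow> Im (f i) = 0 \<and> Re (f i) \<ge> 0"
  shows "psd (dmat n f)"
proof (rule psdI[of _ n])
  fix v :: "complex vec" assume v: "v \<in> carrier_vec n"
  have dv: "dmat n f *\<^sub>v v = vec n (\<lambda>i. f i * v $ i)"
  proof (rule eq_vecI)
    fix i assume "i < dim_vec (vec n (\<lambda>i. f i * v $ i))"
    hence i: "i < n" by simp
    have "(dmat n f *\<^sub>v v) $ i = (\<Sum>k\<in>{0..<n}. (if i = k then f i else 0) * v $ k)"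
      using i v by (simp add: scalar_prod_def)
    also have "\<dots> = (\<Sum>k\<in>{0..<n}. if k = i then f i * v $ i else 0)" by (rule sum.cong, auto)
    also have "\<dots> = f i * v $ i" using i by simp
    finally show "(dmat n f *\<^sub>v v) $ i = vec n (\<lambda>i. f i * v $ i) $ i" using i by simp
  qed (use v in auto)
  have "bil (dmat n f) v v = (\<Sum>i\<in>{0..<n}. cnj (v $ i) * (f i * v $ i))"
    unfolding bil_def dv using v by (simp add: scalar_prod_def)
  also have "\<dots> = (\<Sum>i\<in>{0..<n}. complex_of_real (Re (f i) * ((Re (v $ i))\<^sup>2 + (Im (v $ i))\<^sup>2)))"
  proof (rule sum.cong[OF refl])
    fix i assume i: "i \<in> {0..<n}"
    show "cnj (v $ i) * (f i * v $ i) = complex_of_real (Re (f i) * ((Re (v $ i))\<^sup>2 + (Im (v $ i))\<^sup>2))"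
      using f[of i] i by (simp add: complex_eq_iff algebra_simps power2_eq_square)
  qed
  finally have b: "bil (dmat n f) v v = (\<Sum>i\<in>{0..<n}. complex_of_real (Re (f i) * ((Re (v $ i))\<^sup>2 + (Im (v $ i))\<^sup>2)))" .
  have "Re (f i) * ((Re (v $ i))\<^sup>2 + (Im (v $ i))\<^sup>2) \<ge> 0" if "i \<in> {0..<n}" for i using f[of i] that by simp
  thus "Im (bil (dmat n f) v v) = 0 \<and> Re (bil (dmat n f) v v) \<ge> 0" unfolding b Im_sum Re_sum
    by (auto intro: sum_nonneg)
qed simp

lemma col_dmat: "i < n \<Longrightarrow> col (dmat n f) i = f i \<cdot>\<^sub>v unit_vec n i"
  by (rule eq_vecI, auto)

lemma mult_unit_vec: assumes V: "(V :: complex mat) \<in> carrier_mat n n" and i: "i < n" shows "V *\<^sub>v unit_vec n i = col V i"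
proof (rule eq_vecI)
  fix k assume "k < dim_vec (col V i)"
  hence k: "k < n" using V by simp
  have "(V *\<^sub>v unit_vec n i) $ k = row V k \<bullet> unit_vec n i" using V k by simp
  also have "\<dots> = (\<Sum>j\<in>{0..<n}. if j = i then row V k $ j else 0)"
    unfolding scalar_prod_def by (rule sum.cong, auto simp: unit_vec_def)
  also have "\<dots> = row V k $ i" using i by simp
  finally show "(V *\<^sub>v unit_vec n i) $ k = col V i $ k" using V k i by simp
qed (use V in simp)

lemma col_eig: assumes V: "unitary V n" and X: "X = V * dmat n f * adj V" and i: "i < n"
  shows "X *\<^sub>v col V i = f i \<cdot>\<^sub>v col V i"
proof -
  have Vc: "V \<in> carrier_mat n n" using unitary_carrier[OF V] .
  have "X * V = V * dmat n f" unfolding X using Vc unitary_left[OF V] by (simp add: sq_assoc[of _ n])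
  hence "col (X * V) i = col (V * dmat n f) i" by simp
  moreover have "col (X * V) i = X *\<^sub>v col V i" using X Vc i by (subst col_mult2[of _ n n], auto)
  moreover have "col (V * dmat n f) i = V *\<^sub>v col (dmat n f) i" using Vc i by (subst col_mult2[of _ n n], auto)
  moreover have "\<dots> = f i \<cdot>\<^sub>v col V i" unfolding col_dmat[OF i] using Vc i
    by (simp add: mult_mat_vec[OF Vc] mult_unit_vec)
  ultimately show ?thesis by simp
qed

lemma unitary_col_norm: assumes V: "unitary V n" and i: "i < n"
  shows "conjugate (col V i) \<bullet> col V i = 1"
proof -
  have Vc: "V \<in> carrier_mat n n" using unitary_carrier[OF V] .
  have "(adj V * V) $$ (i,i) = 1" unfolding unitary_left[OF V] using i by simp
  moreover have "row (adj V) i = conjugate (col V i)" using Vc i by (intro eq_vecI, auto)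
  ultimately show ?thesis using Vc i by simp
qed

lemma psd_sqrt_unique: assumes B: "psd B" and C: "psd C" and BC: "B * B = C * C"
  shows "B = C"
proof -
  obtain n where Bc: "B \<in> carrier_mat n n" using psd_carrier[OF B] by blast
  obtain n' where Cc: "C \<in> carrier_mat n' n'" using psd_carrier[OF C] by blast
  have "n' = n" using arg_cong[OF BC, of dim_row] Bc Cc by simp
  hence Cc: "C \<in> carrier_mat n n" using Cc by simp
  define X where "X = B - C"
  have Xc: "X \<in> carrier_mat n n" unfolding X_def using minus_carrier_mat[OF Cc] .
  have Xh: "adj X = X" unfolding X_def adj_minus[OF Bc Cc] psd_herm[OF B] psd_herm[OF C] ..
  obtain V d where V: "unitary V n" and Xeq: "X = V * dmat n (\<lambda>i. complex_of_real (d i)) * adj V"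
    using spectral[OF Xc Xh] by blast
  have Vc: "V \<in> carrier_mat n n" using unitary_carrier[OF V] .
  have d0: "d i = 0" if i: "i < n" for i
  proof (rule ccontr)
    assume di: "d i \<noteq> 0"
    define w where "w = col V i"
    have w: "w \<in> carrier_vec n" unfolding w_def using Vc i by simp
    have w1: "conjugate w \<bullet> w = 1" unfolding w_def by (rule unitary_col_norm[OF V i])
    have Xw: "X *\<^sub>v w = complex_of_real (d i) \<cdot>\<^sub>v w" unfolding w_def by (rule col_eig[OF V Xeq i])
    have e1: "B * X = B * B - B * C" unfolding X_def by (rule mult_minus_distrib_mat, insert Bc Cc, auto)
    have e2: "X * C = B * C - C * C" unfolding X_def by (rule minus_mult_distrib_mat, insert Bc Cc, auto)
    have "B * B - C * C = B * X + X * C" unfolding e1 e2 using Bc Cc by (intro eq_matI, auto)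
    hence "B * X + X * C = C * C - C * C" unfolding BC by simp
    also have "C * C - C * C = 0\<^sub>m n n" using Cc by (intro eq_matI, auto)
    finally have "B * X + X * C = 0\<^sub>m n n" .
    moreover have "0\<^sub>m n n *\<^sub>v w = 0\<^sub>v n" using w by (intro eq_vecI, auto simp: scalar_prod_def)
    ultimately have "0 = bil (B * X + X * C) w w" unfolding bil_def using w by simp
    also have "\<dots> = bil (B * X) w w + bil (X * C) w w" unfolding bil_def
      using Bc Cc Xc w by (simp add: add_mult_distrib_mat_vec[of _ n n] scalar_prod_add_distrib[of _ n])
    also have "bil (B * X) w w = complex_of_real (d i) * bil B w w"
      unfolding bil_def using Bc Xc w Xw by (simp add: mult_mat_vec[OF Bc])
    also have "bil (X * C) w w = conjugate (adj X *\<^sub>v w) \<bullet> (C *\<^sub>v w)"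
      unfolding bil_def using Cc Xc w by (simp add: adj_move[OF Xc])
    also have "\<dots> = complex_of_real (d i) * bil C w w"
      unfolding Xh Xw bil_def using Cc w by (simp add: conjugate_smult_vec)
    finally have "0 = complex_of_real (d i) * (bil B w w + bil C w w)" by (simp add: algebra_simps)
    hence s0: "bil B w w + bil C w w = 0" using di by simp
    have pB: "Im (bil B w w) = 0 \<and> Re (bil B w w) \<ge> 0" by (rule psdD[OF B Bc w])
    have pC: "Im (bil C w w) = 0 \<and> Re (bil C w w) \<ge> 0" by (rule psdD[OF C Cc w])
    have "bil B w w = 0" using s0 pB pC by (simp add: complex_eq_iff)
    hence Bw: "B *\<^sub>v w = 0\<^sub>v n" by (rule psd_qf_zero[OF B Bc w])
    have "bil C w w = 0" using s0 pB pC by (simp add: complex_eq_iff)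
    hence Cw: "C *\<^sub>v w = 0\<^sub>v n" by (rule psd_qf_zero[OF C Cc w])
    have "X *\<^sub>v w = 0\<^sub>v n" unfolding X_def using Bc Cc w Bw Cw
      by (simp add: minus_mult_distrib_mat_vec[of _ n n])
    hence "complex_of_real (d i) \<cdot>\<^sub>v w = 0\<^sub>v n" using Xw by simp
    hence "conjugate w \<bullet> (complex_of_real (d i) \<cdot>\<^sub>v w) = 0" using w by simp
    hence "complex_of_real (d i) = 0" using w w1 by simp
    thus False using di by simp
  qed
  have "dmat n (\<lambda>i. complex_of_real (d i)) = 0\<^sub>m n n" by (rule eq_matI, auto simp: d0)
  hence X0: "X = 0\<^sub>m n n" unfolding Xeq using Vc by simp
  show ?thesis
  proof (rule eq_matI)
    fix i j assume "i < dim_row C" "j < dim_col C"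
    hence i: "i < n" and j: "j < n" using Cc by auto
    have "X $$ (i,j) = 0" unfolding X0 using i j by simp
    thus "B $$ (i,j) = C $$ (i,j)" unfolding X_def using Bc Cc i j by simp
  qed (use Bc Cc in auto)
qed

lemma unitary_cancel1: "unitary W n \<Longrightarrow> X \<in> carrier_mat n n \<Longrightarrow> adj W * (W * X) = X"
  unfolding unitary_def by (subst assoc_mult_mat[symmetric, of _ n n _ n _ n], auto)
lemma unitary_cancel2: "unitary W n \<Longrightarrow> X \<in> carrier_mat n n \<Longrightarrow> W * (adj W * X) = X"
  unfolding unitary_def by (subst assoc_mult_mat[symmetric, of _ n n _ n _ n], auto)
lemma dmat_mult2: "X \<in> carrier_mat n n \<Longrightarrow> dmat n f * (dmat n g * X) = dmat n (\<lambda>i. f i * g i) * X"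
  by (subst assoc_mult_mat[symmetric, of _ n n _ n _ n], auto simp: dmat_mult)

lemma psd_one: "psd (1\<^sub>m n)"
proof -
  have "1\<^sub>m n = dmat n (\<lambda>_. 1)" by (rule eq_matI, auto)
  thus ?thesis using psd_dmat[of n "\<lambda>_. 1"] by simp
qed

lemma psd_spectral: assumes p: "psd A" and A: "A \<in> carrier_mat n n"
  shows "\<exists>W d. unitary W n \<and> (\<forall>i. d i \<ge> 0) \<and> A = W * dmat n (\<lambda>i. complex_of_real (d i)) * adj W"
proof -
  obtain W d where W: "unitary W n" and Aeq: "A = W * dmat n (\<lambda>i. complex_of_real (d i)) * adj W"
    using spectral[OF A psd_herm[OF p]] by blast
  have Wc: "W \<in> carrier_mat n n" using unitary_carrier[OF W] .
  have D: "adj W * A * W = dmat n (\<lambda>i. complex_of_real (d i))"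
    unfolding Aeq using Wc W by (simp add: sq_assoc[of _ n] unitary_cancel1 unitary_left)
  have "d i \<ge> 0" if i: "i < n" for i
  proof -
    have "(adj W * A * W) $$ (i,i) = bil A (col W i) (col W i)" by (rule adj_A_entry[OF A Wc i])
    hence "complex_of_real (d i) = bil A (col W i) (col W i)" unfolding D using i by simp
    moreover have "Re (bil A (col W i) (col W i)) \<ge> 0" using psdD[OF p A, of "col W i"] Wc i by simp
    ultimately show ?thesis by (metis Re_complex_of_real)
  qed
  define d' where "d' = (\<lambda>i. if i < n then d i else 0)"
  have "dmat n (\<lambda>i. complex_of_real (d i)) = dmat n (\<lambda>i. complex_of_real (d' i))"
    by (rule eq_matI, auto simp: d'_def)
  moreover have "\<forall>i. d' i \<ge> 0" using \<open>\<And>i. i < n \<Longrightarrow> d i \<ge> 0\<close> by (simp add: d'_def)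
  ultimately show ?thesis using W Aeq by metis
qed

lemma sqrt_psd_of_spectral: assumes W: "unitary W n" and d: "\<forall>i. d i \<ge> 0"
  shows "psd (W * dmat n (\<lambda>i. complex_of_real (sqrt (d i))) * adj W)"
    and "(W * dmat n (\<lambda>i. complex_of_real (sqrt (d i))) * adj W) * (W * dmat n (\<lambda>i. complex_of_real (sqrt (d i))) * adj W)
       = W * dmat n (\<lambda>i. complex_of_real (d i)) * adj W"
proof -
  have Wc: "W \<in> carrier_mat n n" using unitary_carrier[OF W] .
  show "psd (W * dmat n (\<lambda>i. complex_of_real (sqrt (d i))) * adj W)"
    by (rule psd_congr[OF psd_dmat Wc dmat_carrier], use d in auto)
  have e: "(\<lambda>i. complex_of_real (sqrt (d i)) * complex_of_real (sqrt (d i))) = (\<lambda>i. complex_of_real (d i))"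
    using d by (auto simp flip: of_real_mult)
  show "(W * dmat n (\<lambda>i. complex_of_real (sqrt (d i))) * adj W) * (W * dmat n (\<lambda>i. complex_of_real (sqrt (d i))) * adj W)
       = W * dmat n (\<lambda>i. complex_of_real (d i)) * adj W"
    using Wc W by (simp add: sq_assoc[of _ n] unitary_cancel1 dmat_mult2 e)
qed

lemma msqrt_exists: assumes p: "psd A" shows "\<exists>B. psd B \<and> B * B = A"
proof -
  obtain n where A: "A \<in> carrier_mat n n" using psd_carrier[OF p] by blast
  obtain W d where W: "unitary W n" and d: "\<forall>i. d i \<ge> 0" and Aeq: "A = W * dmat n (\<lambda>i. complex_of_real (d i)) * adj W"
    using psd_spectral[OF p A] by blast
  show ?thesis using sqrt_psd_of_spectral[OF W d] Aeq by blast
qed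

lemma msqrt: assumes p: "psd A" shows "psd (msqrt A)" "msqrt A * msqrt A = A"
proof -
  have ex1: "\<exists>!B. psd B \<and> B * B = A"
    using msqrt_exists[OF p] psd_sqrt_unique by blast
  have "psd (msqrt A) \<and> msqrt A * msqrt A = A" unfolding msqrt_def by (rule theI'[OF ex1])
  thus "psd (msqrt A)" "msqrt A * msqrt A = A" by auto
qed

lemma msqrt_eq: assumes p: "psd A" and B: "psd B" and BB: "B * B = A" shows "msqrt A = B"
  using psd_sqrt_unique[OF msqrt(1)[OF p] B] msqrt(2)[OF p] BB by simp

lemma sq_one_right[simp]: "(A :: complex mat) \<in> carrier_mat n n \<Longrightarrow> A * 1\<^sub>m n = A" by simp
lemma sq_one_left[simp]: "(A :: complex mat) \<in> carrier_mat n n \<Longrightarrow> 1\<^sub>m n * A = A" by simp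

lemma cnj_if[simp]: "cnj (if b then x else y) = (if b then cnj x else cnj y)"
  by simp

lemma dmat_prod: "(\<And>i. i < n \<Longrightarrow> f i * g i = h i) \<Longrightarrow> dmat n f * dmat n g = dmat n h"
  unfolding dmat_mult by (rule eq_matI, auto)

lemma dmat_prod2: "(\<And>i. i < n \<Longrightarrow> f i * g i = h i) \<Longrightarrow> X \<in> carrier_mat n n \<Longrightarrow> dmat n f * (dmat n g * X) = dmat n h * X"
  by (subst sq_assoc[symmetric, of _ n], auto simp: dmat_prod)

lemma mult_dmat_index: "X \<in> carrier_mat n n \<Longrightarrow> i < n \<Longrightarrow> j < n \<Longrightarrow> (X * dmat n f) $$ (i,j) = X $$ (i,j) * f j"
proof -
  assume X: "X \<in> carrier_mat n n" and i: "i < n" and j: "j < n"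
  have "(X * dmat n f) $$ (i,j) = (\<Sum>k\<in>{0..<n}. X $$ (i,k) * (if k = j then f k else 0))"
    using X i j by (simp add: scalar_prod_def)
  also have "\<dots> = (\<Sum>k\<in>{0..<n}. if k = j then X $$ (i,j) * f j else 0)" by (rule sum.cong, auto)
  also have "\<dots> = X $$ (i,j) * f j" using j by simp
  finally show ?thesis .
qed

lemma polar: assumes Th: "Th \<in> carrier_mat n n"
  shows "\<exists>U Q P. U \<in> carrier_mat n n \<and> psd Q \<and> Q \<in> carrier_mat n n \<and> psd P \<and> P \<in> carrier_mat n n \<and>
    msqrt (adj Th * Th) = Q \<and> msqrt (Th * adj Th) = P \<and>
    U * Q = Th \<and> adj U * Th = Q \<and> P = U * Q * adj U \<and> P = Th * adj U \<and> U * (adj U * U) = U \<and>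
    mtrace P = mtrace Q \<and> Im (mtrace Q) = 0 \<and> (Th \<noteq> 0\<^sub>m n n \<longrightarrow> Re (mtrace Q) > 0)"
proof -
  define K where "K = adj Th * Th"
  have Kc: "K \<in> carrier_mat n n" unfolding K_def using Th by simp
  have pK: "psd K" 
    using psd_congr[OF psd_one adj_carrier[OF Th] one_carrier_mat] Th unfolding K_def by simp
  obtain W d where W: "unitary W n" and d: "\<forall>i. d i \<ge> 0" and Keq: "K = W * dmat n (\<lambda>i. complex_of_real (d i)) * adj W"
    using psd_spectral[OF pK Kc] by blast
  have Wc[simp]: "W \<in> carrier_mat n n" using unitary_carrier[OF W] .
  have [simp]: "Th \<in> carrier_mat n n" using Th .
  have [simp]: "dim_row Th = n" "dim_col Th = n" "dim_row W = n" "dim_col W = n" using carrier_matD[OF Th] carrier_matD[OF Wc] by auto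
  define D where "D = dmat n (\<lambda>i. complex_of_real (d i))"
  define S where "S = dmat n (\<lambda>i. complex_of_real (sqrt (d i)))"
  define E where "E = dmat n (\<lambda>i. if d i > 0 then complex_of_real (1 / sqrt (d i)) else 0)"
  define Pi where "Pi = dmat n (\<lambda>i. if d i > 0 then 1 else 0)"
  have [simp]: "D \<in> carrier_mat n n" "S \<in> carrier_mat n n" "E \<in> carrier_mat n n" "Pi \<in> carrier_mat n n"
    unfolding D_def S_def E_def Pi_def by auto
  have sq: "sqrt (d i) * sqrt (d i) = d i" for i using d[rule_format, of i] real_sqrt_mult_self[of "d i"] abs_of_nonneg[of "d i"] by simp
  have sq': "complex_of_real (sqrt (d i)) * complex_of_real (sqrt (d i)) = complex_of_real (d i)" for i
    unfolding of_real_mult[symmetric] sq ..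
  have dz: "d i = 0" if "\<not> d i > 0" for i using d[rule_format, of i] that by simp
  have sqd: "complex_of_real (1 / sqrt (d i)) * complex_of_real (d i) = complex_of_real (sqrt (d i))" if "d i > 0" for i
  proof -
    have h: "1 / sqrt (d i) * d i = sqrt (d i)" using that sq[of i] by (simp add: field_simps)
    show ?thesis using arg_cong[OF h, of complex_of_real] by (simp only: of_real_mult)
  qed
  have sqd2: "complex_of_real (d i) / complex_of_real (sqrt (d i)) = complex_of_real (sqrt (d i))" if "d i > 0" for i
  proof -
    have h: "d i / sqrt (d i) = sqrt (d i)" using that sq[of i] by (simp add: field_simps)
    show ?thesis using arg_cong[OF h, of complex_of_real] by (simp only: of_real_divide)
  qed
  have sqe: "complex_of_real (1 / sqrt (d i)) * complex_of_real (sqrt (d i)) = 1" if "d i > 0" for i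
  proof -
    have h: "1 / sqrt (d i) * sqrt (d i) = 1" using that by simp
    show ?thesis using arg_cong[OF h, of complex_of_real] by (simp only: of_real_mult of_real_1)
  qed
  have ED1: "E * D = S" unfolding E_def D_def S_def
    by (rule dmat_prod, auto simp: dz sqd sqd2)
  have ED2': "D * E = S" unfolding E_def D_def S_def
    by (rule dmat_prod, auto simp: dz sqd sqd2 mult.commute)
  have ES1: "E * S = Pi" unfolding E_def Pi_def S_def
    by (rule dmat_prod, auto simp: dz sqe)
  have ES2: "S * E = Pi" unfolding E_def Pi_def S_def
    by (rule dmat_prod, auto simp: dz sqe mult.commute)
  have SS: "S * S = D" unfolding D_def S_def by (rule dmat_prod, simp add: sq')
  have SP1: "S * Pi = S" unfolding Pi_def S_def
    by (rule dmat_prod, auto simp: dz)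
  have SP2: "Pi * S = S" unfolding Pi_def S_def
    by (rule dmat_prod, auto simp: dz)
  have EP1: "E * Pi = E" unfolding Pi_def E_def
    by (rule dmat_prod, auto)
  have EP2: "Pi * E = E" unfolding Pi_def E_def
    by (rule dmat_prod, auto)
  note ED = ED1 ED2' and ES = ES1 ES2 and SP = SP1 SP2 and EP = EP1 EP2
  have ED2: "E * (D * X) = S * X" "D * (E * X) = S * X" "E * (S * X) = Pi * X" "S * (E * X) = Pi * X"
    "S * (S * X) = D * X" "S * (Pi * X) = S * X" "Pi * (S * X) = S * X" "E * (Pi * X) = E * X" "Pi * (E * X) = E * X"
    if "X \<in> carrier_mat n n" for X
    using that by (simp_all flip: sq_assoc[of _ n] add: ED ES SS SP EP)
  have adjE: "adj E = E" unfolding E_def adj_dmat by (rule arg_cong[where f="dmat n"], rule ext, auto)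
  have adjS: "adj S = S" unfolding S_def adj_dmat by simp
  have K2: "adj Th * Th = W * (D * adj W)" using Keq unfolding K_def D_def by (simp add: sq_assoc[of _ n])
  have KX: "adj Th * (Th * X) = W * (D * (adj W * X))" if "X \<in> carrier_mat n n" for X
    using that K2 by (simp flip: sq_assoc[of _ n])
  have WX: "adj W * (W * X) = X" "W * (adj W * X) = X" if "X \<in> carrier_mat n n" for X
    using unitary_cancel1[OF W that] unitary_cancel2[OF W that] by auto
  have WW: "adj W * W = 1\<^sub>m n" "W * adj W = 1\<^sub>m n" using W unfolding unitary_def by auto
  have DW: "adj W * K * W = D" unfolding Keq D_def by (simp add: sq_assoc[of _ n] WX WW)
  define C where "C = dmat n (\<lambda>i. 1 - (if d i > 0 then 1 else 0))"
  have Cc[simp]: "C \<in> carrier_mat n n" unfolding C_def by simp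
  have adjC: "adj C = C" unfolding C_def by (rule eq_matI, auto)
  define Y where "Y = Th * W * C"
  have Yc: "Y \<in> carrier_mat n n" unfolding Y_def by simp
  have "adj Y * Y = C * (adj W * K * W) * C"
    unfolding Y_def K_def by (simp add: adj_mult_sq[of _ n] adjC sq_assoc[of _ n])
  also have "\<dots> = dmat n (\<lambda>_. 0)" unfolding DW D_def C_def 
    by (subst dmat_prod[of n _ _ "\<lambda>_. 0"], use d in \<open>force simp: order_le_less\<close>, rule dmat_prod, simp)
  finally have "mtrace (adj Y * 1\<^sub>m n * Y) = 0" using Yc by (simp add: mtrace_def)
  hence "1\<^sub>m n * Y = 0\<^sub>m n n" using trace_zero_mult[OF psd_one one_carrier_mat Yc] by simp
  hence Y0: "Y = 0\<^sub>m n n" using Yc by simp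
  have F1: "Th * W * Pi = Th * W"
  proof (rule eq_matI)
    fix i j assume "i < dim_row (Th * W)" "j < dim_col (Th * W)"
    hence i: "i < n" and j: "j < n" by auto
    have "Y $$ (i,j) = 0" unfolding Y0 using i j by simp
    hence "(Th * W) $$ (i,j) * (1 - (if d j > 0 then 1 else 0)) = 0"
      unfolding Y_def C_def using mult_dmat_index[of "Th * W" n i j] i j by simp
    thus "(Th * W * Pi) $$ (i,j) = (Th * W) $$ (i,j)"
      unfolding Pi_def using mult_dmat_index[of "Th * W" n i j] i j by (cases "d j > 0", auto)
  qed (auto simp: Pi_def)
  have F1X: "Th * (W * (Pi * X)) = Th * (W * X)" if "X \<in> carrier_mat n n" for X
    using that F1 by (simp flip: sq_assoc[of _ n])
  have F1': "Th * (W * Pi) = Th * W" using F1 by (simp flip: sq_assoc[of _ n])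
  note rules = sq_assoc[of _ n] ED2 KX K2 WX WW F1X F1' ED ES SS SP EP adjE adjS adj_mult_sq[of _ n]
  define Q where "Q = W * S * adj W"
  define U where "U = Th * W * E * adj W"
  define P where "P = U * Q * adj U"
  have Qc: "Q \<in> carrier_mat n n" and Uc: "U \<in> carrier_mat n n" and Pc: "P \<in> carrier_mat n n"
    unfolding Q_def U_def P_def by auto
  have pQ: "psd Q" unfolding Q_def S_def using sqrt_psd_of_spectral(1)[OF W d] .
  have QQ: "Q * Q = K" unfolding Q_def S_def Keq using sqrt_psd_of_spectral(2)[OF W d] .
  have mQ: "msqrt (adj Th * Th) = Q" using msqrt_eq[OF pK pQ QQ] K_def by simp
  have UQ: "U * Q = Th" unfolding U_def Q_def by (simp add: rules)
  have UTh: "adj U * Th = Q" unfolding U_def Q_def by (simp add: rules)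
  have UUU: "U * (adj U * U) = U" unfolding U_def by (simp add: rules)
  have pP: "psd P" unfolding P_def by (rule psd_congr[OF pQ Uc Qc])
  have PP: "P * P = Th * adj Th" unfolding P_def U_def Q_def by (simp add: rules)
  have mP: "msqrt (Th * adj Th) = P" 
    using msqrt_eq[OF _ pP PP] psd_congr[OF psd_one Th one_carrier_mat] by simp
  have PTh: "P = Th * adj U" unfolding P_def U_def Q_def by (simp add: rules)
  have trQ: "mtrace Q = (\<Sum>i<n. complex_of_real (sqrt (d i)))"
  proof -
    have "mtrace Q = mtrace (S * adj W * W)" unfolding Q_def 
      using mtrace_comm[of W n n "S * adj W"] by (simp add: sq_assoc[of _ n])
    also have "\<dots> = mtrace S" by (simp add: rules)
    also have "\<dots> = (\<Sum>i<n. complex_of_real (sqrt (d i)))" unfolding S_def by (subst mtrace_sum[of _ n], auto)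
    finally show ?thesis .
  qed
  have trP: "mtrace P = mtrace Q"
  proof -
    have "mtrace P = mtrace (Q * adj U * U)" unfolding P_def
      using mtrace_comm[of U n n "Q * adj U"] Uc Qc by (simp add: sq_assoc[of _ n])
    also have "Q * adj U * U = Q" unfolding Q_def U_def by (simp add: rules)
    finally show ?thesis .
  qed
  have ImQ: "Im (mtrace Q) = 0" unfolding trQ Im_sum by simp
  have ReQ: "Re (mtrace Q) > 0" if nz: "Th \<noteq> 0\<^sub>m n n"
  proof -
    have "\<exists>i<n. d i > 0"
    proof (rule ccontr)
      assume "\<not> (\<exists>i<n. d i > 0)"
      hence "Pi = 0\<^sub>m n n" unfolding Pi_def by (intro eq_matI, auto)
      hence "Th * W = 0\<^sub>m n n" using F1 by simp
      hence "Th * W * adj W = 0\<^sub>m n n" by simp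
      hence "Th = 0\<^sub>m n n" by (simp add: rules)
      thus False using nz by simp
    qed
    then obtain i where i: "i < n" "d i > 0" by blast
    have "Re (mtrace Q) = (\<Sum>j<n. sqrt (d j))" unfolding trQ Re_sum by simp
    also have "\<dots> \<ge> sqrt (d i)" by (rule member_le_sum, use i d in auto)
    finally show ?thesis using i by (smt (verit) real_sqrt_gt_zero)
  qed
  have ReQ': "Th \<noteq> 0\<^sub>m n n \<longrightarrow> Re (mtrace Q) > 0" using ReQ by blast
  show ?thesis
    by (intro exI[of _ U] exI[of _ Q] exI[of _ P] conjI; fact)
qed

lemma blk_lo: "p < (n::nat) \<Longrightarrow> p div n = 0 \<and> p mod n = p" by simp

lemma blk_hi: assumes "n \<le> p" "p < n + (n::nat)" shows "p div n = 1 \<and> p mod n = p - n"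
proof -
  obtain r where p: "p = n + r" using assms(1) le_Suc_ex by blast
  have r: "r < n" using assms(2) p by simp
  hence n: "n \<noteq> 0" by simp
  show ?thesis unfolding p using r n by simp
qed

lemma fb_index: assumes "A \<in> carrier_mat n n" "B \<in> carrier_mat n n" "C \<in> carrier_mat n n" "D \<in> carrier_mat n n"
  and "a < n" "b < n"
  shows "four_block_mat A B C D $$ (a,b) = A $$ (a,b)"
    "four_block_mat A B C D $$ (a,n+b) = B $$ (a,b)"
    "four_block_mat A B C D $$ (n+a,b) = C $$ (a,b)"
    "four_block_mat A B C D $$ (n+a,n+b) = D $$ (a,b)"
  using assms by auto

lemma ampl1: assumes tau: "\<forall>X\<in>carrier_mat n n. \<tau> X \<in> carrier_mat n n" and M: "M \<in> carrier_mat n n"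
  shows "ampl 1 n \<tau> M = \<tau> M"
proof -
  have inner: "mat n n (\<lambda>(a, b). M $$ ((p div n) * n + a, (q div n) * n + b)) = M" if "p < n" "q < n" for p q
    using that M by (intro eq_matI, auto)
  have tM: "\<tau> M \<in> carrier_mat n n" using tau M by auto
  have inner2: "mat n n (($$) M) = M" using M by (intro eq_matI, auto)
  show ?thesis unfolding ampl_def
    by (rule eq_matI, insert tM, auto simp: inner inner2)
qed

lemma ampl2: assumes tau: "\<forall>X\<in>carrier_mat n n. \<tau> X \<in> carrier_mat n n"
  and A: "A \<in> carrier_mat n n" and B: "B \<in> carrier_mat n n" and C: "C \<in> carrier_mat n n" and D: "D \<in> carrier_mat n n"
  shows "ampl 2 n \<tau> (four_block_mat A B C D) = four_block_mat (\<tau> A) (\<tau> B) (\<tau> C) (\<tau> D)"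
proof -
  let ?F = "four_block_mat A B C D"
  have t: "\<tau> A \<in> carrier_mat n n" "\<tau> B \<in> carrier_mat n n" "\<tau> C \<in> carrier_mat n n" "\<tau> D \<in> carrier_mat n n"
    using tau A B C D by auto
  have iA: "mat n n (\<lambda>(a, b). ?F $$ (0 * n + a, 0 * n + b)) = A" using A B C D by (intro eq_matI, auto)
  have iB: "mat n n (\<lambda>(a, b). ?F $$ (0 * n + a, 1 * n + b)) = B" using A B C D by (intro eq_matI, auto)
  have iC: "mat n n (\<lambda>(a, b). ?F $$ (1 * n + a, 0 * n + b)) = C" using A B C D by (intro eq_matI, auto)
  have iD: "mat n n (\<lambda>(a, b). ?F $$ (1 * n + a, 1 * n + b)) = D" using A B C D by (intro eq_matI, auto)
  show ?thesis
  proof (rule eq_matI)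
    fix p q assume "p < dim_row (four_block_mat (\<tau> A) (\<tau> B) (\<tau> C) (\<tau> D))" "q < dim_col (four_block_mat (\<tau> A) (\<tau> B) (\<tau> C) (\<tau> D))"
    hence p: "p < n + n" and q: "q < n + n" using t by auto
    have lhs: "ampl 2 n \<tau> ?F $$ (p,q) = \<tau> (mat n n (\<lambda>(a, b). ?F $$ ((p div n) * n + a, (q div n) * n + b))) $$ (p mod n, q mod n)"
      unfolding ampl_def using p q by simp
    show "ampl 2 n \<tau> ?F $$ (p,q) = four_block_mat (\<tau> A) (\<tau> B) (\<tau> C) (\<tau> D) $$ (p,q)"
    proof (cases "p < n")
      case pl: True
      show ?thesis
      proof (cases "q < n")
        case True thus ?thesis unfolding lhs using pl blk_lo[OF pl] blk_lo[OF True] iA t by simp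
      next
        case False thus ?thesis unfolding lhs using pl q blk_lo[OF pl] blk_hi[of n q] iB t by simp
      qed
    next
      case ph: False
      show ?thesis
      proof (cases "q < n")
        case True thus ?thesis unfolding lhs using ph p blk_hi[of n p] blk_lo[OF True] iC t by simp
      next
        case False thus ?thesis unfolding lhs using ph p q blk_hi[of n p] blk_hi[of n q] iD t by simp
      qed
    qed
  qed (use t in \<open>auto simp: ampl_def\<close>)
qed

lemma fb_zero: assumes "A \<in> carrier_mat n n" "B \<in> carrier_mat n n" "C \<in> carrier_mat n n" "D \<in> carrier_mat n n"
  and z: "four_block_mat A B C D = 0\<^sub>m (n+n) (n+n)"
  shows "A = 0\<^sub>m n n" "C = 0\<^sub>m n n"
proof -
  show "A = 0\<^sub>m n n"
  proof (rule eq_matI)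
    fix a b assume "a < dim_row (0\<^sub>m n n)" "b < dim_col (0\<^sub>m n n)"
    hence a: "a < n" and b: "b < n" by auto
    have "four_block_mat A B C D $$ (a,b) = 0" unfolding z using a b by simp
    thus "A $$ (a,b) = 0\<^sub>m n n $$ (a,b)" using fb_index(1)[OF assms(1-4) a b] a b by simp
  qed (use assms in auto)
  show "C = 0\<^sub>m n n"
  proof (rule eq_matI)
    fix a b assume "a < dim_row (0\<^sub>m n n)" "b < dim_col (0\<^sub>m n n)"
    hence a: "a < n" and b: "b < n" by auto
    have "four_block_mat A B C D $$ (n+a,b) = 0" unfolding z using a b by simp
    thus "C $$ (a,b) = 0\<^sub>m n n $$ (a,b)" using fb_index(3)[OF assms(1-4) a b] a b by simp
  qed (use assms in auto)
qed

lemma mtrace_fb: assumes "A \<in> carrier_mat n n" "B \<in> carrier_mat n n" "C \<in> carrier_mat n n"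
  shows "mtrace (four_block_mat A B C (0\<^sub>m n n)) = mtrace A"
proof -
  have "mtrace (four_block_mat A B C (0\<^sub>m n n)) = (\<Sum>i<n+n. four_block_mat A B C (0\<^sub>m n n) $$ (i,i))"
    unfolding mtrace_def using assms by simp
  also have "\<dots> = (\<Sum>i<n. four_block_mat A B C (0\<^sub>m n n) $$ (i,i))"
    by (rule sum.mono_neutral_right, use assms in auto)
  also have "\<dots> = mtrace A" unfolding mtrace_def using assms by simp
  finally show ?thesis .
qed

lemma fb_mult: assumes "A1 \<in> carrier_mat n n" "B1 \<in> carrier_mat n n" "C1 \<in> carrier_mat n n" "D1 \<in> carrier_mat n n"
  "A2 \<in> carrier_mat n n" "B2 \<in> carrier_mat n n" "C2 \<in> carrier_mat n n" "D2 \<in> carrier_mat n n"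
  shows "four_block_mat A1 B1 C1 D1 * four_block_mat A2 B2 C2 D2 = four_block_mat (A1 * A2 + B1 * C2) (A1 * B2 + B1 * D2) (C1 * A2 + D1 * C2) (C1 * B2 + D1 * D2)"
  by (rule mult_four_block_mat, insert assms, auto)

theorem main:
  fixes n :: nat and \<tau> :: "complex mat \<Rightarrow> complex mat"
    and Th :: "complex mat" and lam :: complex
  assumes ch: "quantum_channel n \<tau>"
    and Th: "Th \<in> carrier_mat n n" and nz: "Th \<noteq> 0\<^sub>m n n"
    and eig: "\<tau> Th = lam \<cdot>\<^sub>m Th" and lam1: "cmod lam = 1"
  shows "let g = mtrace (msqrt (mat_adjoint Th * Th));
             \<rho> = (1 / g) \<cdot>\<^sub>m msqrt (Th * mat_adjoint Th);
             \<sigma> = (1 / g) \<cdot>\<^sub>m msqrt (mat_adjoint Th * Th)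
         in density_matrix n \<rho> \<and> density_matrix n \<sigma> \<and> \<tau> \<rho> = \<rho> \<and> \<tau> \<sigma> = \<sigma>"
proof -
  have lin: "linear_map_mat n \<tau>" and cp: "completely_positive n \<tau>" and tp: "trace_preserving n \<tau>"
    using ch unfolding quantum_channel_def by auto
  have tc: "\<forall>X\<in>carrier_mat n n. \<tau> X \<in> carrier_mat n n" using lin unfolding linear_map_mat_def by auto
  have tsm: "\<tau> (c \<cdot>\<^sub>m X) = c \<cdot>\<^sub>m \<tau> X" if "X \<in> carrier_mat n n" for c X
    using lin that unfolding linear_map_mat_def by auto
  have ttr: "mtrace (\<tau> X) = mtrace X" if "X \<in> carrier_mat n n" for X
    using tp that unfolding trace_preserving_def by auto
  have pos: "psd (\<tau> X)" if "psd X" "X \<in> carrier_mat n n" for X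
  proof -
    have "X \<in> carrier_mat (1 * n) (1 * n)" using that by simp
    hence "psd (ampl 1 n \<tau> X)" using cp that unfolding completely_positive_def by blast
    thus ?thesis unfolding ampl1[OF tc that(2)] .
  qed
  obtain U Q P where Uc: "U \<in> carrier_mat n n" and pQ: "psd Q" and Qc: "Q \<in> carrier_mat n n"
    and pP: "psd P" and Pc: "P \<in> carrier_mat n n" and mQ: "msqrt (adj Th * Th) = Q"
    and mP: "msqrt (Th * adj Th) = P" and UQ: "U * Q = Th" and UTh: "adj U * Th = Q"
    and PUQ: "P = U * Q * adj U" and PTh: "P = Th * adj U" and UUU: "U * (adj U * U) = U"
    and trPQ: "mtrace P = mtrace Q" and ImQ: "Im (mtrace Q) = 0" and ReQ': "Th \<noteq> 0\<^sub>m n n \<longrightarrow> Re (mtrace Q) > 0"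
    using polar[OF Th] by blast
  define g where "g = mtrace Q"
  have gI: "Im g = 0" and gR: "Re g > 0" using ImQ ReQ' nz unfolding g_def by auto
  have g0: "g \<noteq> 0" using gR by auto
  have hQ: "adj Q = Q" by (rule psd_herm[OF pQ])
  have ThU: "adj Th * U = Q"
  proof -
    have "adj (adj U * Th) = adj Th * U" using adj_mult[OF adj_carrier[OF Uc] Th] by simp
    thus ?thesis using UTh hQ by simp
  qed
  have QU: "Q * adj U = adj Th"
  proof -
    have "adj (U * Q) = Q * adj U" using adj_mult[OF Uc Qc] hQ by simp
    thus ?thesis using UQ by simp
  qed
  have lamc: "cnj lam * lam = 1"
  proof -
    have "cnj lam * lam = complex_of_real ((cmod lam)\<^sup>2)" using complex_norm_square[of lam] by (simp only: mult.commute)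
    thus ?thesis using lam1 by simp
  qed
  have lam0: "lam \<noteq> 0" using lam1 by auto
  define Z where "Z = four_block_mat U (0\<^sub>m n 0) (1\<^sub>m n) (0\<^sub>m n 0)"
  have Zc: "Z \<in> carrier_mat (n + n) n" unfolding Z_def using four_block_carrier_mat[OF Uc zero_carrier_mat[of n 0], of "0\<^sub>m n 0" "1\<^sub>m n"] by simp
  have Qb: "four_block_mat Q (0\<^sub>m n 0) (0\<^sub>m 0 n) (0\<^sub>m 0 0) = Q" using Qc by (intro eq_matI, auto)
  have zz: "(0\<^sub>m a 0 :: complex mat) * 0\<^sub>m 0 b = 0\<^sub>m a b" for a b by (intro eq_matI, auto simp: scalar_prod_def)
  have ZQ: "Z * Q = four_block_mat (U * Q) (0\<^sub>m n 0) Q (0\<^sub>m n 0)"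
    unfolding Z_def
    by (subst Qb[symmetric], subst mult_four_block_mat[of U n n "0\<^sub>m n 0" 0 "1\<^sub>m n" n "0\<^sub>m n 0" Q n "0\<^sub>m n 0" 0 "0\<^sub>m 0 n" "0\<^sub>m 0 0"],
        insert Uc Qc, auto simp: zz)
  have adjZ: "adj Z = four_block_mat (adj U) (1\<^sub>m n) (0\<^sub>m 0 n) (0\<^sub>m 0 n)"
    unfolding Z_def by (subst adj_four_block[of _ n n _ 0 _ n], insert Uc, auto)
  define M where "M = four_block_mat P Th (adj Th) Q"
  have Mc: "M \<in> carrier_mat (2 * n) (2 * n)" unfolding M_def using Pc Qc by (simp add: mult_2)
  have ZQZ: "Z * Q * adj Z = M"
  proof -
    have "Z * Q * adj Z = four_block_mat (U * Q * adj U + 0\<^sub>m n 0 * 0\<^sub>m 0 n) (U * Q * 1\<^sub>m n + 0\<^sub>m n 0 * 0\<^sub>m 0 n)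
        (Q * adj U + 0\<^sub>m n 0 * 0\<^sub>m 0 n) (Q * 1\<^sub>m n + 0\<^sub>m n 0 * 0\<^sub>m 0 n)"
      unfolding ZQ adjZ
      by (rule mult_four_block_mat, insert Uc Qc, auto)
    also have "\<dots> = M" unfolding M_def zz PUQ[symmetric] QU UQ using Uc Qc Pc Th PTh by simp
    finally show ?thesis .
  qed
  have pM: "psd M" unfolding ZQZ[symmetric] by (rule psd_congr[OF pQ Zc Qc])
  define N where "N = ampl 2 n \<tau> M"
  have pN: "psd N" using cp Mc pM unfolding completely_positive_def N_def by blast
  have tP: "\<tau> P \<in> carrier_mat n n" and tQ: "\<tau> Q \<in> carrier_mat n n" and tT: "\<tau> Th \<in> carrier_mat n n"
    and tT': "\<tau> (adj Th) \<in> carrier_mat n n" using tc Pc Qc Th by auto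
  have Neq: "N = four_block_mat (\<tau> P) (\<tau> Th) (\<tau> (adj Th)) (\<tau> Q)"
    unfolding N_def M_def by (rule ampl2[OF tc Pc Th adj_carrier[OF Th] Qc])
  have Nc: "N \<in> carrier_mat (n + n) (n + n)" unfolding Neq using tP tQ by simp
  have tadj: "\<tau> (adj Th) = cnj lam \<cdot>\<^sub>m adj Th"
  proof (rule eq_matI)
    fix a b assume "a < dim_row (cnj lam \<cdot>\<^sub>m adj Th)" "b < dim_col (cnj lam \<cdot>\<^sub>m adj Th)"
    hence a: "a < n" and b: "b < n" using Th by auto
    have "N $$ (n + a, b) = adj N $$ (n + a, b)" unfolding psd_herm[OF pN] ..
    also have "\<dots> = cnj (N $$ (b, n + a))" using Nc a b by simp
    finally have "\<tau> (adj Th) $$ (a,b) = cnj (\<tau> Th $$ (b,a))"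
      unfolding Neq using fb_index[OF tP tT tT' tQ a b] fb_index[OF tP tT tT' tQ b a] by simp
    thus "\<tau> (adj Th) $$ (a,b) = (cnj lam \<cdot>\<^sub>m adj Th) $$ (a,b)" unfolding eig using a b Th by simp
  qed (use tT' Th in auto)
  define c where "c = - lam"
  have cc1: "cnj c * c = 1" unfolding c_def using lamc by simp
  have cl: "cnj c * lam = -1" unfolding c_def using lamc by simp
  have cl2: "cnj lam * c = -1" unfolding c_def using lamc by simp
  define T where "T = four_block_mat (c \<cdot>\<^sub>m U) (0\<^sub>m n n) (1\<^sub>m n) (0\<^sub>m n n)"
  have cU: "c \<cdot>\<^sub>m U \<in> carrier_mat n n" using Uc by simp
  have Tc: "T \<in> carrier_mat (n + n) (n + n)" unfolding T_def using cU by simp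
  have lTh: "lam \<cdot>\<^sub>m Th \<in> carrier_mat n n" using Th by simp
  have lTh': "cnj lam \<cdot>\<^sub>m adj Th \<in> carrier_mat n n" using Th by simp
  define V1 where "V1 = c \<cdot>\<^sub>m (\<tau> P * U) + lam \<cdot>\<^sub>m Th"
  define V3 where "V3 = (- 1) \<cdot>\<^sub>m Q + \<tau> Q"
  have V1c: "V1 \<in> carrier_mat n n" and V3c: "V3 \<in> carrier_mat n n" unfolding V1_def V3_def using tP Uc Th Qc tQ by auto
  have NT: "N * T = four_block_mat V1 (0\<^sub>m n n) V3 (0\<^sub>m n n)"
  proof -
    have "N * T = four_block_mat (\<tau> P * (c \<cdot>\<^sub>m U) + (lam \<cdot>\<^sub>m Th) * 1\<^sub>m n) (\<tau> P * 0\<^sub>m n n + (lam \<cdot>\<^sub>m Th) * 0\<^sub>m n n)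
      ((cnj lam \<cdot>\<^sub>m adj Th) * (c \<cdot>\<^sub>m U) + \<tau> Q * 1\<^sub>m n) ((cnj lam \<cdot>\<^sub>m adj Th) * 0\<^sub>m n n + \<tau> Q * 0\<^sub>m n n)"
      unfolding Neq eig tadj T_def by (rule fb_mult[OF tP lTh lTh' tQ cU zero_carrier_mat one_carrier_mat zero_carrier_mat])
    also have "\<tau> P * (c \<cdot>\<^sub>m U) = c \<cdot>\<^sub>m (\<tau> P * U)" by (rule mult_smult_distrib[OF tP Uc])
    also have "(cnj lam \<cdot>\<^sub>m adj Th) * (c \<cdot>\<^sub>m U) = (- 1) \<cdot>\<^sub>m Q"
    proof -
      have "(cnj lam \<cdot>\<^sub>m adj Th) * (c \<cdot>\<^sub>m U) = cnj lam \<cdot>\<^sub>m (c \<cdot>\<^sub>m (adj Th * U))"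
        using mult_smult_assoc_mat[OF adj_carrier[OF Th] cU] mult_smult_distrib[OF adj_carrier[OF Th] Uc] by simp
      also have "\<dots> = (- 1) \<cdot>\<^sub>m Q" unfolding ThU using Qc 
        by (intro eq_matI, auto simp: mult.assoc[symmetric] cl2)
      finally show ?thesis .
    qed
    finally show ?thesis unfolding V1_def V3_def using tP tQ Th Uc Qc by simp
  qed
  have adjT: "adj T = four_block_mat (cnj c \<cdot>\<^sub>m adj U) (1\<^sub>m n) (0\<^sub>m n n) (0\<^sub>m n n)"
    unfolding T_def by (subst adj_four_block[of _ n n _ n _ n], insert Uc, auto simp: adj_smult)
  have TNT: "adj T * N * T = four_block_mat (cnj c \<cdot>\<^sub>m adj U * V1 + V3) (0\<^sub>m n n) (0\<^sub>m n n) (0\<^sub>m n n)"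
  proof -
    have "adj T * N * T = adj T * (N * T)" using Tc Nc by (intro assoc_mult_mat, auto)
    also have "\<dots> = four_block_mat (cnj c \<cdot>\<^sub>m adj U * V1 + 1\<^sub>m n * V3) (cnj c \<cdot>\<^sub>m adj U * 0\<^sub>m n n + 1\<^sub>m n * 0\<^sub>m n n)
        (0\<^sub>m n n * V1 + 0\<^sub>m n n * V3) (0\<^sub>m n n * 0\<^sub>m n n + 0\<^sub>m n n * 0\<^sub>m n n)"
      unfolding adjT NT by (rule fb_mult, insert Uc V1c V3c, auto)
    finally show ?thesis using Uc V1c V3c by simp
  qed
  define t1 where "t1 = mtrace (adj U * (\<tau> P * U))"
  have trTNT: "mtrace (adj T * N * T) = t1 - g"
  proof -
    have aV1: "adj U * V1 = c \<cdot>\<^sub>m (adj U * (\<tau> P * U)) + lam \<cdot>\<^sub>m Q"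
    proof -
      have "adj U * V1 = adj U * (c \<cdot>\<^sub>m (\<tau> P * U)) + adj U * (lam \<cdot>\<^sub>m Th)"
        unfolding V1_def by (rule mult_add_distrib_mat, insert Uc tP Th, auto)
      also have "adj U * (c \<cdot>\<^sub>m (\<tau> P * U)) = c \<cdot>\<^sub>m (adj U * (\<tau> P * U))"
        by (rule mult_smult_distrib, insert Uc tP, auto)
      also have "adj U * (lam \<cdot>\<^sub>m Th) = lam \<cdot>\<^sub>m Q"
        unfolding UTh[symmetric] by (rule mult_smult_distrib, insert Uc Th, auto)
      finally show ?thesis .
    qed
    have "mtrace (adj T * N * T) = mtrace (cnj c \<cdot>\<^sub>m adj U * V1 + V3)"
      unfolding TNT by (rule mtrace_fb, insert Uc V1c V3c, auto)
    also have "\<dots> = mtrace (cnj c \<cdot>\<^sub>m (adj U * V1)) + mtrace V3"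
      using Uc V1c V3c by (simp add: mtrace_add[of _ n] mult_smult_assoc_mat[of _ n n])
    also have "mtrace (cnj c \<cdot>\<^sub>m (adj U * V1)) = cnj c * (c * t1 + lam * g)"
      unfolding aV1 t1_def g_def using Uc tP Qc
      by (simp add: mtrace_smult[of _ n] mtrace_add[of _ n])
    also have "mtrace V3 = - g + g" unfolding V3_def g_def using Qc tQ
      by (simp add: mtrace_add[of _ n] mtrace_smult[of _ n] ttr)
    finally have e: "mtrace (adj T * N * T) = cnj c * (c * t1 + lam * g) + (- g + g)" .
    have "cnj c * (c * t1 + lam * g) = (cnj c * c) * t1 + (cnj c * lam) * g" by (simp add: algebra_simps)
    also have "\<dots> = t1 - g" unfolding cc1 cl by simp
    finally show ?thesis using e by simp
  qed
  define X where "X = U * adj U"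
  define R where "R = 1\<^sub>m n - X"
  have Xc: "X \<in> carrier_mat n n" and Rc: "R \<in> carrier_mat n n" unfolding X_def R_def using Uc by auto
  have XX: "X * X = X"
  proof -
    have "X * X = U * (adj U * U) * adj U" unfolding X_def using Uc by (simp add: sq_assoc[of _ n])
    thus ?thesis unfolding UUU X_def .
  qed
  have adjR: "adj R = R" unfolding R_def X_def using Uc
    by (simp add: adj_minus[of _ n n] adj_mult_sq[of _ n])
  have RR: "R * R = R"
  proof -
    have "R * R = 1\<^sub>m n * R - X * R" unfolding R_def[of] using Xc Rc
      by (subst minus_mult_distrib_mat[of _ n n], auto simp: R_def)
    also have "X * R = X - X" unfolding R_def using Xc XX
      by (subst mult_minus_distrib_mat[of _ n n], auto)
    finally show ?thesis unfolding R_def using Xc by (intro eq_matI, auto)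
  qed
  have split: "\<tau> P = \<tau> P * X + \<tau> P * R"
  proof -
    have "\<tau> P * R = \<tau> P - \<tau> P * X" unfolding R_def using tP Xc
      by (subst mult_minus_distrib_mat[of _ n n], auto)
    thus ?thesis using tP Xc by (intro eq_matI, auto)
  qed
  have pTP: "psd (\<tau> P)" by (rule pos[OF pP Pc])
  have trR: "mtrace (adj R * \<tau> P * R) = mtrace (\<tau> P * R)"
  proof -
    have "mtrace (R * (\<tau> P * R)) = mtrace (\<tau> P * R * R)" by (rule mtrace_comm, use Rc tP in auto)
    also have "\<tau> P * R * R = \<tau> P * R" using tP Rc RR by (simp add: sq_assoc[of _ n])
    finally show ?thesis unfolding adjR using Rc tP by (simp add: sq_assoc[of _ n])
  qed
  have pR: "psd (adj R * \<tau> P * R)" using psd_congr[OF pTP adj_carrier[OF Rc] tP] by simp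
  have ReR: "Re (mtrace (\<tau> P * R)) \<ge> 0" using psd_mtrace(2)[OF pR, of n] Rc tP trR by simp
  have t1X: "t1 = mtrace (\<tau> P * X)"
  proof -
    have "t1 = mtrace (\<tau> P * U * adj U)" unfolding t1_def
      by (rule mtrace_comm, use Uc tP in auto)
    thus ?thesis unfolding X_def using tP Uc by (simp add: sq_assoc[of _ n])
  qed
  have trTP: "mtrace (\<tau> P) = g" unfolding g_def using ttr[OF Pc] trPQ by simp
  have sumtr: "g = t1 + mtrace (\<tau> P * R)"
    using arg_cong[OF split, of mtrace] trTP t1X tP Xc Rc by (simp add: mtrace_add[of _ n])
  have "Re (mtrace (adj T * N * T)) \<le> 0" unfolding trTNT using sumtr ReR by simp
  hence NT0: "N * T = 0\<^sub>m (n + n) (n + n)" by (rule trace_zero_mult[OF pN Nc Tc])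
  have V1z: "V1 = 0\<^sub>m n n" and V3z: "V3 = 0\<^sub>m n n" 
    using fb_zero[OF V1c zero_carrier_mat V3c zero_carrier_mat] NT0 NT by auto
  have tauQ: "\<tau> Q = Q"
  proof (rule eq_matI)
    fix i j assume "i < dim_row Q" "j < dim_col Q"
    hence i: "i < n" and j: "j < n" using Qc by auto
    have "V3 $$ (i,j) = 0" unfolding V3z using i j by simp
    thus "\<tau> Q $$ (i,j) = Q $$ (i,j)" unfolding V3_def using i j Qc tQ by simp
  qed (use Qc tQ in auto)
  have tPU: "\<tau> P * U = Th"
  proof (rule eq_matI)
    fix i j assume "i < dim_row Th" "j < dim_col Th"
    hence i: "i < n" and j: "j < n" using Th by auto
    have "V1 $$ (i,j) = 0" unfolding V1z using i j by simp
    hence "lam * (Th $$ (i,j) - (\<tau> P * U) $$ (i,j)) = 0" unfolding V1_def c_def using i j Th tP Uc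
      by (simp add: algebra_simps)
    thus "(\<tau> P * U) $$ (i,j) = Th $$ (i,j)" using lam0 by simp
  qed (use Th tP Uc in auto)
  have "mtrace (adj T * N * T) = 0" using Tc Nc by (simp add: sq_assoc[of _ "n + n"] NT0 mtrace_def)
  hence "Re (mtrace (\<tau> P * R)) = 0" using trTNT sumtr by simp
  hence "Re (mtrace (adj R * \<tau> P * R)) \<le> 0" using trR by simp
  hence PR0: "\<tau> P * R = 0\<^sub>m n n" by (rule trace_zero_mult[OF pTP tP Rc])
  have tauP: "\<tau> P = P"
  proof -
    have "\<tau> P * X = Th * adj U" unfolding X_def tPU[symmetric] using tP Uc by (simp add: sq_assoc[of _ n])
    hence "\<tau> P = Th * adj U + 0\<^sub>m n n" using split PR0 by simp
    thus ?thesis using PTh Th Uc by simp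
  qed
  have ginv: "Im (1 / g) = 0" "Re (1 / g) \<ge> 0" using gI gR by (auto simp: Re_divide Im_divide)
  have dm: "density_matrix n ((1 / g) \<cdot>\<^sub>m A)" if "psd A" "A \<in> carrier_mat n n" "mtrace A = g" for A
    unfolding density_matrix_def using that psd_smult[OF that(1) ginv] g0 by (simp add: mtrace_smult[of _ n])
  show ?thesis unfolding Let_def mat_adjoint_adj mQ mP g_def[symmetric]
    using dm[OF pP Pc] dm[OF pQ Qc] trPQ tsm[OF Pc] tsm[OF Qc] tauP tauQ unfolding g_def by simp
qed

theorem mainTheorem13:
  fixes n :: nat and \<tau> :: "complex mat \<Rightarrow> complex mat"
    and Th :: "complex mat" and lam :: complex
  assumes "quantum_channel n \<tau>"
    and "Th \<in> carrier_mat n n" and "Th \<noteq> 0\<^sub>m n n"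
    and "\<tau> Th = lam \<cdot>\<^sub>m Th" and "cmod lam = 1"
  shows "let g = mtrace (msqrt (mat_adjoint Th * Th));
             \<rho> = (1 / g) \<cdot>\<^sub>m msqrt (Th * mat_adjoint Th);
             \<sigma> = (1 / g) \<cdot>\<^sub>m msqrt (mat_adjoint Th * Th)
         in density_matrix n \<rho> \<and> density_matrix n \<sigma> \<and> \<tau> \<rho> = \<rho> \<and> \<tau> \<sigma> = \<sigma>"
    using main[OF assms] .

end
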